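(* Let $\mathcal{X}$ be a Banach space, $\mathcal{L}\in\mathcal{B}(\mathcal{X})$ the generator of a contractive uniformly continuous semigroup, and $M\in\mathcal{B}(\mathcal{X})$ a contraction such that $\|M^n-P\|_\infty\le\tilde c\,\delta^n$ for a projection $P\in\mathcal{B}(\mathcal{X})$, some $\delta\in(0,1)$, $\tilde c>1$ and all $n\in\mathbb{N}$. Then there is $\epsilon>0$ such that for all $t\ge0$, $n\in\mathbb{N}$ with $t\in[0,n\epsilon]$, and $\tilde\delta\in(\delta,1)$, $$\Big\|\big(Me^{\frac tn\mathcal{L}}\big)^n-e^{tP\mathcal{L}P}P\Big\|_\infty\le\frac{tc_p\|\mathcal{L}\|_\infty}{n}+\frac{c_p+(1+e^{\tilde b})(1+c_p^2)}{2}\frac{t^2\|\mathcal{L}\|_\infty^2}{n}+\frac{2\tilde c}{\tilde\delta-\delta}\tilde\delta^n+\frac{2\tilde\delta}{1-\tilde\delta}\frac{e^{\frac{6tc_p\tilde c\|\mathcal{L}\|_\infty}{\tilde\delta-\delta}}}{n},$$ where $c_p=\|\mathbf{1}-P\|_\infty$ and $e^{\tilde b}=\sup_{s\in[0,t]}\|e^{sP\mathcal{L}P}\|_\infty$.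
   Context: $\mathcal{B}(\mathcal{X})$: bounded operators with operator norm $\|\cdot\|_\infty$; $\mathbf{1}$ the identity; contraction: norm at most $1$; projection: bounded idempotent. Contractive semigroup: $\|e^{t\mathcal{L}}\|_\infty\le1$ for all $t\ge0$. *)

theory Defs
  imports "HOL-Analysis.Analysis"
begin

(* Bounded operators on a (real) Banach space are the type of bounded linear maps,
   with operator norm, composition and identity id_blinfun. *)

primrec opow :: "nat \<Rightarrow> ('a::real_normed_vector \<Rightarrow>\<^sub>L 'a) \<Rightarrow> ('a \<Rightarrow>\<^sub>L 'a)" where
  "opow 0 A = id_blinfun"
| "opow (Suc n) A = A o\<^sub>L opow n A"

definition op_exp :: "('a::banach \<Rightarrow>\<^sub>L 'a) \<Rightarrow> ('a \<Rightarrow>\<^sub>L 'a)" where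
  "op_exp A = (\<Sum>k. (1 / fact k) *\<^sub>R opow k A)"

end

theory Submission
  imports Defs
begin


type_synonym 'a op = "'a \<Rightarrow>\<^sub>L 'a"

lemma cassoc: "(a o\<^sub>L b) o\<^sub>L c = a o\<^sub>L (b o\<^sub>L c)"
  by (rule blinfun_eqI) simp
lemma cid_left[simp]: "id_blinfun o\<^sub>L a = a"
  by (rule blinfun_eqI) simp
lemma cid_right[simp]: "a o\<^sub>L id_blinfun = a"
  by (rule blinfun_eqI) simp
lemma cadd_left: "(a + b) o\<^sub>L c = (a o\<^sub>L c) + (b o\<^sub>L c)"
  by (rule blinfun_eqI) (simp add: plus_blinfun.rep_eq)
lemma cadd_right: "c o\<^sub>L (a + b) = (c o\<^sub>L a) + (c o\<^sub>L b)"
  by (rule blinfun_eqI) (simp add: plus_blinfun.rep_eq blinfun.add_right)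
lemma cdiff_left: "(a - b) o\<^sub>L c = (a o\<^sub>L c) - (b o\<^sub>L c)"
  by (rule blinfun_eqI) (simp add: minus_blinfun.rep_eq)
lemma cdiff_right: "c o\<^sub>L (a - b) = (c o\<^sub>L a) - (c o\<^sub>L b)"
  by (rule blinfun_eqI) (simp add: minus_blinfun.rep_eq blinfun.diff_right)
lemma cscale_left: "(r *\<^sub>R a) o\<^sub>L c = r *\<^sub>R (a o\<^sub>L c)"
  by (rule blinfun_eqI) (simp add: scaleR_blinfun.rep_eq)
lemma cscale_right: "c o\<^sub>L (r *\<^sub>R a) = r *\<^sub>R (c o\<^sub>L a)"
  by (rule blinfun_eqI) (simp add: scaleR_blinfun.rep_eq blinfun.scaleR_right)

lemmas calg = cassoc cadd_left cadd_right cdiff_left cdiff_right cscale_left cscale_right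

lemma opow_Suc_right: "opow (Suc n) A = opow n A o\<^sub>L A"
proof (induction n)
  case (Suc n)
  have "opow (Suc (Suc n)) A = A o\<^sub>L opow (Suc n) A" by simp
  also have "\<dots> = A o\<^sub>L (opow n A o\<^sub>L A)" using Suc by simp
  also have "\<dots> = opow (Suc n) A o\<^sub>L A" by (simp add: cassoc)
  finally show ?case .
qed simp

lemma opow_add: "opow (m + n) A = opow m A o\<^sub>L opow n A"
  by (induction m) (simp_all add: cassoc)

lemma norm_opow: "norm (opow n (A::'a::real_normed_vector op)) \<le> norm A ^ n"
proof (induction n)
  case 0 then show ?case by (simp add: norm_blinfun_id_le)
next
  case (Suc n)
  have "norm (opow (Suc n) A) \<le> norm A * norm (opow n A)"
    by (simp add: norm_blinfun_compose)
  also have "\<dots> \<le> norm A * norm A ^ n" using Suc by (simp add: mult_left_mono)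
  finally show ?case by simp
qed

lemma norm_opow_le1: "norm (A::'a::real_normed_vector op) \<le> 1 \<Longrightarrow> norm (opow n A) \<le> 1"
  by (meson norm_opow norm_ge_zero order_trans power_le_one)

lemma opow_scale: "opow n (r *\<^sub>R A) = r ^ n *\<^sub>R opow n A"
  by (induction n) (simp_all add: cscale_left cscale_right)

lemma opow_comm: "B o\<^sub>L A = A o\<^sub>L B \<Longrightarrow> B o\<^sub>L opow n A = opow n A o\<^sub>L B"
proof (induction n)
  case (Suc n)
  assume h: "B o\<^sub>L A = A o\<^sub>L B"
  have "B o\<^sub>L opow (Suc n) A = (B o\<^sub>L A) o\<^sub>L opow n A" by (simp add: cassoc)
  also have "\<dots> = A o\<^sub>L (B o\<^sub>L opow n A)" using h by (simp add: cassoc)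
  also have "\<dots> = opow (Suc n) A o\<^sub>L B" using Suc h by (simp add: cassoc)
  finally show ?case .
qed simp


lemma exp_term_norm_le:
  "norm ((1 / fact k) *\<^sub>R opow k (A::'a::real_normed_vector op)) \<le> norm A ^ k / fact k"
proof -
  have "norm ((1 / fact k) *\<^sub>R opow k A) = norm (opow k A) / fact k" by simp
  also have "\<dots> \<le> norm A ^ k / fact k" by (intro divide_right_mono norm_opow) simp
  finally show ?thesis .
qed

lemma summable_exp_real: "summable (\<lambda>k. (x::real) ^ k / fact k)"
proof -
  have "(\<lambda>k. x ^ k / fact k) = (\<lambda>k. inverse (fact k) * x ^ k)"
    by (simp add: divide_inverse mult.commute)
  then show ?thesis using summable_exp[of x] by simp
qed

lemma exp_real_suminf: "(\<Sum>k. (x::real) ^ k / fact k) = exp x"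
proof -
  have "(\<lambda>k. x ^ k / fact k) = (\<lambda>k. x ^ k /\<^sub>R fact k)"
    by (simp add: divide_inverse mult.commute)
  then show ?thesis using exp_converges[of x] by (simp add: sums_iff)
qed

lemma summable_norm_exp_terms:
  "summable (\<lambda>k. norm ((1 / fact k) *\<^sub>R opow k (A::'a::real_normed_vector op)))"
proof (rule summable_comparison_test[OF _ summable_exp_real[of "norm A"]])
  show "\<exists>N. \<forall>n\<ge>N. norm (norm ((1 / fact n) *\<^sub>R opow n A)) \<le> norm A ^ n / fact n"
  proof (intro exI[of _ 0] allI impI)
    fix n :: nat
    show "norm (norm ((1 / fact n) *\<^sub>R opow n A)) \<le> norm A ^ n / fact n"
      using exp_term_norm_le[of n A] by (simp only: real_norm_def abs_norm_cancel)
  qed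
qed

lemma summable_exp_terms:
  "summable (\<lambda>k. (1 / fact k) *\<^sub>R opow k (A::'a::banach op))"
  by (rule summable_norm_cancel[OF summable_norm_exp_terms])

lemma norm_op_exp_tail:
  fixes A :: "'a::banach op"
  shows "norm (op_exp A - (\<Sum>k<m. (1 / fact k) *\<^sub>R opow k A))
           \<le> exp (norm A) - (\<Sum>k<m. norm A ^ k / fact k)"
proof -
  let ?f = "\<lambda>k. (1 / fact k) *\<^sub>R opow k A"
  let ?g = "\<lambda>k. norm A ^ k / fact k"
  have s1: "op_exp A - (\<Sum>k<m. ?f k) = (\<Sum>k. ?f (k + m))"
    using suminf_split_initial_segment[OF summable_exp_terms[of A], of m]
    unfolding op_exp_def by simp
  have s2: "exp (norm A) - (\<Sum>k<m. ?g k) = (\<Sum>k. ?g (k + m))"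
    using suminf_split_initial_segment[OF summable_exp_real[of "norm A"], of m]
    exp_real_suminf[of "norm A"] by simp
  have sn: "summable (\<lambda>k. norm (?f (k + m)))"
    using summable_norm_exp_terms[of A] by (rule summable_ignore_initial_segment)
  have sg: "summable (\<lambda>k. ?g (k + m))"
    using summable_exp_real[of "norm A"] by (rule summable_ignore_initial_segment)
  have "norm (\<Sum>k. ?f (k + m)) \<le> (\<Sum>k. norm (?f (k + m)))"
    by (rule summable_norm[OF sn])
  also have "\<dots> \<le> (\<Sum>k. ?g (k + m))"
    by (rule suminf_le[OF _ sn sg]) (rule exp_term_norm_le)
  finally show ?thesis using s1 s2 by simp
qed

lemma norm_op_exp: "norm (op_exp (A::'a::banach op)) \<le> exp (norm A)"
  using norm_op_exp_tail[of A 0] by simp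

lemma norm_op_exp_minus_id:
  "norm (op_exp (A::'a::banach op) - id_blinfun) \<le> exp (norm A) - 1"
  using norm_op_exp_tail[of A 1] by simp

lemma norm_op_exp_minus_lin:
  "norm (op_exp (A::'a::banach op) - id_blinfun - A) \<le> exp (norm A) - 1 - norm A"
  using norm_op_exp_tail[of A 2] by (simp add: numeral_2_eq_2 diff_diff_eq)

lemma op_exp_zero: "op_exp (0::'a::banach op) = id_blinfun"
proof -
  have "op_exp (0::'a op) = (\<Sum>k\<in>{0}. (1 / fact k) *\<^sub>R opow k (0::'a op))"
    unfolding op_exp_def
    by (rule suminf_finite) (auto simp: gr0_conv_Suc)
  then show ?thesis by simp
qed

lemma comp_suminf_left:
  fixes B :: "'a::banach op"
  assumes "summable f"
  shows "B o\<^sub>L suminf f = (\<Sum>k. B o\<^sub>L f k)"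
proof -
  have "bounded_linear (\<lambda>X. B o\<^sub>L X)"
    by (rule bounded_bilinear.bounded_linear_right[OF bounded_bilinear_blinfun_compose])
  from bounded_linear.suminf[OF this assms] show ?thesis .
qed

lemma comp_suminf_right:
  fixes B :: "'a::banach op"
  assumes "summable f"
  shows "suminf f o\<^sub>L B = (\<Sum>k. f k o\<^sub>L B)"
proof -
  have "bounded_linear (\<lambda>X. X o\<^sub>L B)"
    by (rule bounded_bilinear.bounded_linear_left[OF bounded_bilinear_blinfun_compose])
  from bounded_linear.suminf[OF this assms] show ?thesis .
qed

lemma op_exp_comm:
  fixes A B :: "'a::banach op"
  assumes "B o\<^sub>L A = A o\<^sub>L B"
  shows "B o\<^sub>L op_exp A = op_exp A o\<^sub>L B"
proof -
  have "B o\<^sub>L op_exp A = (\<Sum>k. B o\<^sub>L ((1 / fact k) *\<^sub>R opow k A))"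
    unfolding op_exp_def by (rule comp_suminf_left[OF summable_exp_terms])
  also have "\<dots> = (\<Sum>k. ((1 / fact k) *\<^sub>R opow k A) o\<^sub>L B)"
    using opow_comm[OF assms] by (simp add: cscale_left cscale_right)
  also have "\<dots> = op_exp A o\<^sub>L B"
    unfolding op_exp_def by (rule comp_suminf_right[OF summable_exp_terms, symmetric])
  finally show ?thesis .
qed


lemma comp_sum_product:
  fixes a b :: "nat \<Rightarrow> 'a::real_normed_vector op"
  shows "(\<Sum>i\<in>I. a i) o\<^sub>L (\<Sum>j\<in>J. b j) = (\<Sum>(i,j)\<in>I \<times> J. a i o\<^sub>L b j)"
proof -
  have "(\<Sum>i\<in>I. a i) o\<^sub>L (\<Sum>j\<in>J. b j) = (\<Sum>i\<in>I. \<Sum>j\<in>J. a i o\<^sub>L b j)"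
    by (simp only: bounded_bilinear.sum_left[OF bounded_bilinear_blinfun_compose])
       (simp only: bounded_bilinear.sum_right[OF bounded_bilinear_blinfun_compose])
  then show ?thesis by (simp add: sum.cartesian_product)
qed

lemma blinfun_Cauchy_product_sums:
  fixes a b :: "nat \<Rightarrow> 'a::banach op"
  assumes a: "summable (\<lambda>k. norm (a k))"
    and b: "summable (\<lambda>k. norm (b k))"
  shows "(\<lambda>k. \<Sum>i\<le>k. a i o\<^sub>L b (k - i)) sums ((\<Sum>k. a k) o\<^sub>L (\<Sum>k. b k))"
proof -
  let ?S1 = "\<lambda>n::nat. {..<n} \<times> {..<n}"
  let ?S2 = "\<lambda>n::nat. {(i,j). i + j < n}"
  have S1_mono: "\<And>m n. m \<le> n \<Longrightarrow> ?S1 m \<subseteq> ?S1 n" by auto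
  have S2_le_S1: "\<And>n. ?S2 n \<subseteq> ?S1 n" by auto
  have S1_le_S2: "\<And>n. ?S1 (n div 2) \<subseteq> ?S2 n" by auto
  have finite_S1: "\<And>n. finite (?S1 n)" by simp
  with S2_le_S1 have finite_S2: "\<And>n. finite (?S2 n)" by (rule finite_subset)

  let ?g = "\<lambda>(i,j). a i o\<^sub>L b j"
  let ?f = "\<lambda>(i,j). norm (a i) * norm (b j)"
  have f_nonneg: "\<And>x. 0 \<le> ?f x" by auto
  then have norm_sum_f: "\<And>A. norm (sum ?f A) = sum ?f A"
    unfolding real_norm_def
    by (simp only: abs_of_nonneg sum_nonneg [rule_format])

  have "(\<lambda>n. (\<Sum>k<n. a k) o\<^sub>L (\<Sum>k<n. b k)) \<longlonglongrightarrow> ((\<Sum>k. a k) o\<^sub>L (\<Sum>k. b k))"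
    by (intro bounded_bilinear.tendsto[OF bounded_bilinear_blinfun_compose]
          summable_LIMSEQ summable_norm_cancel [OF a] summable_norm_cancel [OF b])
  then have 1: "(\<lambda>n. sum ?g (?S1 n)) \<longlonglongrightarrow> ((\<Sum>k. a k) o\<^sub>L (\<Sum>k. b k))"
    by (simp only: comp_sum_product)

  have "(\<lambda>n. (\<Sum>k<n. norm (a k)) * (\<Sum>k<n. norm (b k))) \<longlonglongrightarrow> (\<Sum>k. norm (a k)) * (\<Sum>k. norm (b k))"
    using a b by (intro tendsto_mult summable_LIMSEQ)
  then have "(\<lambda>n. sum ?f (?S1 n)) \<longlonglongrightarrow> (\<Sum>k. norm (a k)) * (\<Sum>k. norm (b k))"
    by (simp only: sum_product sum.Sigma [rule_format] finite_lessThan)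
  then have "convergent (\<lambda>n. sum ?f (?S1 n))"
    by (rule convergentI)
  then have Cauchy: "Cauchy (\<lambda>n. sum ?f (?S1 n))"
    by (rule convergent_Cauchy)
  have "Zfun (\<lambda>n. sum ?f (?S1 n - ?S2 n)) sequentially"
  proof (rule ZfunI, simp only: eventually_sequentially norm_sum_f)
    fix r :: real
    assume r: "0 < r"
    from CauchyD [OF Cauchy r] obtain N
      where "\<forall>m\<ge>N. \<forall>n\<ge>N. norm (sum ?f (?S1 m) - sum ?f (?S1 n)) < r" ..
    then have "\<And>m n. N \<le> n \<Longrightarrow> n \<le> m \<Longrightarrow> norm (sum ?f (?S1 m - ?S1 n)) < r"
      by (simp only: sum_diff finite_S1 S1_mono)
    then have N: "\<And>m n. N \<le> n \<Longrightarrow> n \<le> m \<Longrightarrow> sum ?f (?S1 m - ?S1 n) < r"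
      by (simp only: norm_sum_f)
    show "\<exists>N. \<forall>n\<ge>N. sum ?f (?S1 n - ?S2 n) < r"
    proof (intro exI allI impI)
      fix n
      assume "2 * N \<le> n"
      then have n: "N \<le> n div 2" by simp
      have "sum ?f (?S1 n - ?S2 n) \<le> sum ?f (?S1 n - ?S1 (n div 2))"
        by (intro sum_mono2 finite_Diff finite_S1 f_nonneg Diff_mono subset_refl S1_le_S2)
      also have "\<dots> < r"
        using n div_le_dividend by (rule N)
      finally show "sum ?f (?S1 n - ?S2 n) < r" .
    qed
  qed
  then have "Zfun (\<lambda>n. sum ?g (?S1 n - ?S2 n)) sequentially"
    apply (rule Zfun_le [rule_format])
    apply (simp only: norm_sum_f)
    apply (rule order_trans [OF norm_sum sum_mono])
    apply (auto simp add: norm_blinfun_compose)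
    done
  then have 2: "(\<lambda>n. sum ?g (?S1 n) - sum ?g (?S2 n)) \<longlonglongrightarrow> 0"
    unfolding tendsto_Zfun_iff diff_0_right
    by (simp only: sum_diff finite_S1 S2_le_S1)
  with 1 have "(\<lambda>n. sum ?g (?S2 n)) \<longlonglongrightarrow> ((\<Sum>k. a k) o\<^sub>L (\<Sum>k. b k))"
    by (rule Lim_transform2)
  then show ?thesis
    by (simp only: sums_def sum.triangle_reindex)
qed

lemma binom_real_fact:
  "(\<Sum>i\<le>k. r ^ i / fact i * (s ^ (k - i) / fact (k - i))) = (r + s) ^ k / fact k"
  for r s :: real
proof -
  have "(r + s) ^ k = (\<Sum>i\<le>k. of_nat (k choose i) * r ^ i * s ^ (k - i))"
    by (rule binomial_ring)
  also have "\<dots> = (\<Sum>i\<le>k. fact k * (r ^ i / fact i * (s ^ (k - i) / fact (k - i))))"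
    by (rule sum.cong) (simp_all add: binomial_fact field_simps)
  also have "\<dots> = fact k * (\<Sum>i\<le>k. r ^ i / fact i * (s ^ (k - i) / fact (k - i)))"
    by (simp add: sum_distrib_left)
  finally show ?thesis by simp
qed

lemma op_exp_scale: "op_exp (r *\<^sub>R A) = (\<Sum>k. (r ^ k / fact k) *\<^sub>R opow k A)"
  unfolding op_exp_def by (simp add: opow_scale)

lemma op_exp_add:
  fixes A :: "'a::banach op"
  shows "op_exp (r *\<^sub>R A) o\<^sub>L op_exp (s *\<^sub>R A) = op_exp ((r + s) *\<^sub>R A)"
proof -
  let ?a = "\<lambda>k. (1 / fact k) *\<^sub>R opow k (r *\<^sub>R A)"
  let ?b = "\<lambda>k. (1 / fact k) *\<^sub>R opow k (s *\<^sub>R A)"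
  have "(\<lambda>k. \<Sum>i\<le>k. ?a i o\<^sub>L ?b (k - i)) sums (op_exp (r *\<^sub>R A) o\<^sub>L op_exp (s *\<^sub>R A))"
    unfolding op_exp_def
    by (rule blinfun_Cauchy_product_sums[OF summable_norm_exp_terms summable_norm_exp_terms])
  moreover have "(\<lambda>k. \<Sum>i\<le>k. ?a i o\<^sub>L ?b (k - i)) = (\<lambda>k. (1 / fact k) *\<^sub>R opow k ((r + s) *\<^sub>R A))"
  proof
    fix k
    have "(\<Sum>i\<le>k. ?a i o\<^sub>L ?b (k - i)) = (\<Sum>i\<le>k. (r ^ i / fact i * (s ^ (k - i) / fact (k - i))) *\<^sub>R opow k A)"
    proof (rule sum.cong)
      fix i assume "i \<in> {..k}"
      then have "opow i A o\<^sub>L opow (k - i) A = opow k A"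
        using opow_add[of i "k - i" A] by simp
      then show "?a i o\<^sub>L ?b (k - i) = (r ^ i / fact i * (s ^ (k - i) / fact (k - i))) *\<^sub>R opow k A"
        by (simp add: opow_scale cscale_left cscale_right mult_ac)
    qed simp
    also have "\<dots> = ((r + s) ^ k / fact k) *\<^sub>R opow k A"
      by (simp only: scaleR_sum_left[symmetric] binom_real_fact)
    finally show "(\<Sum>i\<le>k. ?a i o\<^sub>L ?b (k - i)) = (1 / fact k) *\<^sub>R opow k ((r + s) *\<^sub>R A)"
      by (simp add: opow_scale)
  qed
  ultimately show ?thesis unfolding op_exp_def by (simp add: sums_iff)
qed

lemma op_exp_mult_opow:
  fixes A :: "'a::banach op"
  shows "opow n (op_exp (s *\<^sub>R A)) = op_exp ((real n * s) *\<^sub>R A)"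
proof (induction n)
  case 0 then show ?case by (simp add: op_exp_zero)
next
  case (Suc n)
  have "opow (Suc n) (op_exp (s *\<^sub>R A)) = op_exp (s *\<^sub>R A) o\<^sub>L op_exp ((real n * s) *\<^sub>R A)"
    using Suc by simp
  also have "\<dots> = op_exp ((s + real n * s) *\<^sub>R A)" by (rule op_exp_add)
  finally show ?case by (simp add: algebra_simps)
qed


lemma arithN:
  fixes \<alpha> \<delta> c xp w :: real
  assumes aa: "\<delta> * (xp * c * (1 + \<alpha>) + \<alpha>) \<le> \<alpha>" and "0 \<le> \<delta>" "0 \<le> c" "0 \<le> xp"
  shows "1 * xp * (c * \<delta> ^ Suc b) + \<delta> ^ Suc b * (\<alpha> + c * \<delta> * w) + (\<alpha> + c * \<delta> * w) * xp * (c * \<delta> ^ Suc b)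
     \<le> \<delta> ^ b * (\<alpha> + c * \<delta> * (w * (\<delta> * (1 + c * xp))))"
proof -
  define q where "q = \<delta> ^ b"
  have q0: "0 \<le> q" unfolding q_def using assms by simp
  have "1 * xp * (c * \<delta> ^ Suc b) + \<delta> ^ Suc b * (\<alpha> + c * \<delta> * w) + (\<alpha> + c * \<delta> * w) * xp * (c * \<delta> ^ Suc b)
     = q * (\<delta> * (xp * c * (1 + \<alpha>) + \<alpha>)) + q * (c * \<delta> * (w * (\<delta> * (1 + c * xp))))"
    unfolding q_def by (simp add: algebra_simps)
  also have "\<dots> \<le> q * \<alpha> + q * (c * \<delta> * (w * (\<delta> * (1 + c * xp))))"
    using aa q0 by (simp add: mult_left_mono)
  finally show ?thesis unfolding q_def by (simp add: algebra_simps)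
qed

lemma norm_add3: "norm (a + b + d) \<le> norm a + norm b + norm (d::'b::real_normed_vector)"
  by (rule order_trans[OF norm_triangle_ineq add_right_mono[OF norm_triangle_ineq]])

lemma mono3: "a \<le> a' \<Longrightarrow> b \<le> b' \<Longrightarrow> d \<le> d' \<Longrightarrow> 0 \<le> a \<Longrightarrow> 0 \<le> b \<Longrightarrow> 0 \<le> d
   \<Longrightarrow> a * b * d \<le> a' * b' * (d'::real)"
proof -
  assume h: "a \<le> a'" "b \<le> b'" "d \<le> d'" "0 \<le> a" "0 \<le> b" "0 \<le> d"
  have 1: "a * b \<le> a' * b'" by (rule mult_mono) (use h in auto)
  have 2: "0 \<le> a' * b'" using h by simp
  show ?thesis by (rule mult_mono[OF 1 h(3) 2 h(6)])
qed

lemma norm3: "norm (A o\<^sub>L B o\<^sub>L C) \<le> norm A * norm B * norm C" for A B C :: "'a::real_normed_vector op"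
  by (rule order_trans[OF norm_blinfun_compose mult_right_mono[OF norm_blinfun_compose norm_ge_zero]])

lemma geo_le:
  fixes r :: real
  assumes "0 \<le> r" "r < 1"
  shows "(\<Sum>j<n. r ^ j) \<le> 1 / (1 - r)"
proof -
  have "(\<Sum>j<n. r ^ j) = (1 - r ^ n) / (1 - r)"
    using assms sum_gp_strict[of r n] by simp
  also have "\<dots> \<le> 1 / (1 - r)"
    using assms by (intro divide_right_mono) simp_all
  finally show ?thesis .
qed

locale zsetup =
  fixes M P T :: "'a::banach op" and c \<delta> xp :: real
  assumes PP: "P o\<^sub>L P = P" and MP: "M o\<^sub>L P = P" and PM: "P o\<^sub>L M = P"
    and nP: "norm P \<le> 1" and nM: "norm M \<le> 1" and nT: "norm T \<le> 1"
    and conv: "\<And>a. norm (opow a M - P) \<le> c * \<delta> ^ a"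
    and d0: "0 \<le> \<delta>" and c0: "0 \<le> c" and nX: "norm (T - id_blinfun) \<le> xp"
begin

definition R where "R a = opow a M - P"
definition X where "X = T - id_blinfun"
definition Z where "Z n = opow n (M o\<^sub>L T)"

lemma xp0: "0 \<le> xp" using nX norm_ge_zero order_trans by blast

lemma opowM_P: "opow a M o\<^sub>L P = P"
  by (induction a) (simp_all add: cassoc MP)

lemma P_opowM: "P o\<^sub>L opow a M = P"
proof (induction a)
  case (Suc a)
  have "P o\<^sub>L opow (Suc a) M = (P o\<^sub>L M) o\<^sub>L opow a M" by (simp add: cassoc)
  then show ?case using Suc by (simp add: PM)
qed simp

lemma RP: "R a o\<^sub>L P = 0"
  by (simp add: R_def cdiff_left opowM_P PP)

lemma PR: "P o\<^sub>L R a = 0"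
  by (simp add: R_def cdiff_right P_opowM PP)

lemma MR: "M o\<^sub>L R a = R (Suc a)"
  by (simp add: R_def cdiff_right MP)

lemma M_eq: "M = P + R 1"
  by (simp add: R_def)

lemma T_eq: "T = id_blinfun + X"
  by (simp add: X_def)

lemma nR: "norm (R a) \<le> c * \<delta> ^ a"
  using conv by (simp add: R_def)

lemma nXX: "norm X \<le> xp" using nX by (simp add: X_def)

lemma nMT: "norm (M o\<^sub>L T) \<le> 1"
  by (metis mult_le_one nM nT norm_blinfun_compose norm_ge_zero order_trans)

lemma nZ: "norm (Z n) \<le> 1"
  unfolding Z_def by (rule norm_opow_le1[OF nMT])

lemma nZP: "norm (Z n o\<^sub>L P) \<le> 1"
  by (metis mult_le_one nP nZ norm_blinfun_compose norm_ge_zero order_trans)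

lemma Z_Suc: "Z (Suc n) = Z n o\<^sub>L (M o\<^sub>L T)"
  unfolding Z_def by (rule opow_Suc_right)

lemma M_comp: "M o\<^sub>L Y = (P o\<^sub>L Y) + (R 1 o\<^sub>L Y)"
  by (subst M_eq) (rule cadd_left)

lemma T_comp: "T o\<^sub>L Y = Y + (X o\<^sub>L Y)"
  by (subst T_eq) (simp add: cadd_left)

lemma expandR: "M o\<^sub>L T o\<^sub>L R a = (P o\<^sub>L (X o\<^sub>L R a)) + R (Suc a) + (R 1 o\<^sub>L (X o\<^sub>L R a))"
proof -
  have "M o\<^sub>L T o\<^sub>L R a = M o\<^sub>L (T o\<^sub>L R a)" by (rule cassoc)
  also have "\<dots> = (M o\<^sub>L R a) + (M o\<^sub>L (X o\<^sub>L R a))" by (simp only: T_comp cadd_right)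
  also have "\<dots> = R (Suc a) + ((P o\<^sub>L (X o\<^sub>L R a)) + (R 1 o\<^sub>L (X o\<^sub>L R a)))"
    by (simp only: MR M_comp[of "X o\<^sub>L R a"])
  finally show ?thesis by (simp add: algebra_simps)
qed

lemma expandP: "M o\<^sub>L T o\<^sub>L P = (P o\<^sub>L T o\<^sub>L P) + (R 1 o\<^sub>L (X o\<^sub>L P))"
proof -
  have "M o\<^sub>L T o\<^sub>L P = M o\<^sub>L (T o\<^sub>L P)" by (rule cassoc)
  also have "\<dots> = (P o\<^sub>L (T o\<^sub>L P)) + (R 1 o\<^sub>L (T o\<^sub>L P))" by (rule M_comp)
  also have "R 1 o\<^sub>L (T o\<^sub>L P) = (R 1 o\<^sub>L P) + (R 1 o\<^sub>L (X o\<^sub>L P))" by (simp only: T_comp cadd_right)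
  also have "R 1 o\<^sub>L P = 0" by (rule RP)
  finally show ?thesis by (simp add: cassoc)
qed

lemma N_bound:
  assumes a0: "0 \<le> \<alpha>" and aa: "\<delta> * (xp * c * (1 + \<alpha>) + \<alpha>) \<le> \<alpha>"
  shows "\<forall>b. norm (Z n o\<^sub>L R (Suc b)) \<le> \<delta> ^ b * (\<alpha> + c * \<delta> * (\<delta> * (1 + c * xp)) ^ n)"
proof (induction n)
  case 0
  show ?case
  proof
    fix b
    have "norm (Z 0 o\<^sub>L R (Suc b)) \<le> c * \<delta> ^ Suc b" using nR[of "Suc b"] by (simp add: Z_def)
    also have "\<dots> \<le> \<delta> ^ b * (\<alpha> + c * \<delta> * (\<delta> * (1 + c * xp)) ^ 0)"
      using a0 d0 by (simp add: algebra_simps)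
    finally show "norm (Z 0 o\<^sub>L R (Suc b)) \<le> \<delta> ^ b * (\<alpha> + c * \<delta> * (\<delta> * (1 + c * xp)) ^ 0)" .
  qed
next
  case (Suc n)
  let ?\<rho> = "\<delta> * (1 + c * xp)"
  let ?v = "\<alpha> + c * \<delta> * ?\<rho> ^ n"
  show ?case
  proof
    fix b
    have eq: "Z (Suc n) o\<^sub>L R (Suc b) = ((Z n o\<^sub>L P) o\<^sub>L X o\<^sub>L R (Suc b)) + (Z n o\<^sub>L R (Suc (Suc b)))
              + ((Z n o\<^sub>L R 1) o\<^sub>L X o\<^sub>L R (Suc b))"
    proof -
      have "Z (Suc n) o\<^sub>L R (Suc b) = Z n o\<^sub>L (M o\<^sub>L T o\<^sub>L R (Suc b))" by (simp only: Z_Suc cassoc)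
      also have "\<dots> = Z n o\<^sub>L ((P o\<^sub>L (X o\<^sub>L R (Suc b))) + R (Suc (Suc b)) + (R 1 o\<^sub>L (X o\<^sub>L R (Suc b))))"
        by (simp only: expandR)
      finally show ?thesis by (simp only: cadd_right cassoc)
    qed
    have n1: "norm ((Z n o\<^sub>L P) o\<^sub>L X o\<^sub>L R (Suc b)) \<le> 1 * xp * (c * \<delta> ^ Suc b)"
      by (rule order_trans[OF norm3 mono3[OF nZP nXX nR norm_ge_zero norm_ge_zero norm_ge_zero]])
    have n2: "norm (Z n o\<^sub>L R (Suc (Suc b))) \<le> \<delta> ^ Suc b * ?v"
      using Suc by blast
    have v1: "norm (Z n o\<^sub>L R 1) \<le> ?v"
      using Suc[rule_format, of 0] by simp
    have n3: "norm ((Z n o\<^sub>L R 1) o\<^sub>L X o\<^sub>L R (Suc b)) \<le> ?v * xp * (c * \<delta> ^ Suc b)"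
      by (rule order_trans[OF norm3 mono3[OF v1 nXX nR norm_ge_zero norm_ge_zero norm_ge_zero]])
    have "norm (Z (Suc n) o\<^sub>L R (Suc b)) \<le> 1 * xp * (c * \<delta> ^ Suc b) + \<delta> ^ Suc b * ?v + ?v * xp * (c * \<delta> ^ Suc b)"
      unfolding eq by (rule order_trans[OF norm_add3 add_mono[OF add_mono[OF n1 n2] n3]])
    also have "\<dots> \<le> \<delta> ^ b * (\<alpha> + c * \<delta> * (?\<rho> ^ n * ?\<rho>))"
      by (rule arithN[OF aa d0 c0 xp0])
    also have "?\<rho> ^ n * ?\<rho> = ?\<rho> ^ Suc n" by (simp only: power_Suc2)
    finally show "norm (Z (Suc n) o\<^sub>L R (Suc b)) \<le> \<delta> ^ b * (\<alpha> + c * \<delta> * ?\<rho> ^ Suc n)" .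
  qed
qed


definition S where "S n = opow n (P o\<^sub>L T o\<^sub>L P)"

lemma nPTP: "norm (P o\<^sub>L T o\<^sub>L P) \<le> 1"
  by (rule order_trans[OF norm3]) (rule order_trans[OF mono3[OF nP nT nP norm_ge_zero norm_ge_zero norm_ge_zero]], simp)

lemma PP': "P o\<^sub>L (P o\<^sub>L Y) = P o\<^sub>L Y"
  by (simp add: cassoc[symmetric] PP)

lemma PTP_eq: "P o\<^sub>L (P o\<^sub>L T o\<^sub>L P) = P o\<^sub>L T o\<^sub>L P"
  by (simp add: cassoc[symmetric] PP)

lemma E_bound: "norm ((Z n o\<^sub>L P) - (P o\<^sub>L S n)) \<le> xp * (\<Sum>j<n. norm (Z j o\<^sub>L R 1))"
proof (induction n)
  case 0 then show ?case by (simp add: Z_def S_def)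
next
  case (Suc n)
  have eq: "(Z (Suc n) o\<^sub>L P) - (P o\<^sub>L S (Suc n)) =
     (((Z n o\<^sub>L P) - (P o\<^sub>L S n)) o\<^sub>L (P o\<^sub>L T o\<^sub>L P)) + ((Z n o\<^sub>L R 1) o\<^sub>L X o\<^sub>L P)"
  proof -
    have "Z (Suc n) o\<^sub>L P = Z n o\<^sub>L (M o\<^sub>L T o\<^sub>L P)" by (simp only: Z_Suc cassoc)
    also have "\<dots> = Z n o\<^sub>L ((P o\<^sub>L T o\<^sub>L P) + (R 1 o\<^sub>L (X o\<^sub>L P)))" by (simp only: expandP)
    also have "\<dots> = (Z n o\<^sub>L (P o\<^sub>L (P o\<^sub>L T o\<^sub>L P))) + ((Z n o\<^sub>L R 1) o\<^sub>L X o\<^sub>L P)"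
      by (simp only: cadd_right cassoc PP')
    finally have 1: "Z (Suc n) o\<^sub>L P = ((Z n o\<^sub>L P) o\<^sub>L (P o\<^sub>L T o\<^sub>L P)) + ((Z n o\<^sub>L R 1) o\<^sub>L X o\<^sub>L P)"
      by (simp only: cassoc)
    have 2: "P o\<^sub>L S (Suc n) = (P o\<^sub>L S n) o\<^sub>L (P o\<^sub>L T o\<^sub>L P)"
      by (simp only: S_def opow_Suc_right cassoc)
    show ?thesis unfolding 1 2 by (simp add: cdiff_left)
  qed
  have n1: "norm (((Z n o\<^sub>L P) - (P o\<^sub>L S n)) o\<^sub>L (P o\<^sub>L T o\<^sub>L P)) \<le> xp * (\<Sum>j<n. norm (Z j o\<^sub>L R 1)) * 1"
    by (rule order_trans[OF norm_blinfun_compose mult_mono[OF Suc nPTP]]) (simp_all add: xp0 sum_nonneg)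
  have n2: "norm ((Z n o\<^sub>L R 1) o\<^sub>L X o\<^sub>L P) \<le> norm (Z n o\<^sub>L R 1) * xp * 1"
    by (rule order_trans[OF norm3 mono3[OF order_refl nXX nP norm_ge_zero norm_ge_zero norm_ge_zero]])
  have "norm ((Z (Suc n) o\<^sub>L P) - (P o\<^sub>L S (Suc n))) \<le> xp * (\<Sum>j<n. norm (Z j o\<^sub>L R 1)) * 1 + norm (Z n o\<^sub>L R 1) * xp * 1"
    unfolding eq by (rule order_trans[OF norm_triangle_ineq add_mono[OF n1 n2]])
  then show ?case by (simp add: algebra_simps)
qed

lemma W_bound: "norm (Z (Suc n) o\<^sub>L R 0) \<le> xp * norm (R 0) + norm (Z n o\<^sub>L R 1) * (1 + xp * norm (R 0))"
proof -
  have eq: "Z (Suc n) o\<^sub>L R 0 = ((Z n o\<^sub>L P) o\<^sub>L X o\<^sub>L R 0) + (Z n o\<^sub>L R 1) + ((Z n o\<^sub>L R 1) o\<^sub>L X o\<^sub>L R 0)"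
  proof -
    have "Z (Suc n) o\<^sub>L R 0 = Z n o\<^sub>L (M o\<^sub>L T o\<^sub>L R 0)" by (simp only: Z_Suc cassoc)
    also have "\<dots> = Z n o\<^sub>L ((P o\<^sub>L (X o\<^sub>L R 0)) + R (Suc 0) + (R 1 o\<^sub>L (X o\<^sub>L R 0)))"
      by (simp only: expandR)
    finally show ?thesis by (simp only: cadd_right cassoc One_nat_def)
  qed
  have n1: "norm ((Z n o\<^sub>L P) o\<^sub>L X o\<^sub>L R 0) \<le> 1 * xp * norm (R 0)"
    by (rule order_trans[OF norm3 mono3[OF nZP nXX order_refl norm_ge_zero norm_ge_zero norm_ge_zero]])
  have n3: "norm ((Z n o\<^sub>L R 1) o\<^sub>L X o\<^sub>L R 0) \<le> norm (Z n o\<^sub>L R 1) * xp * norm (R 0)"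
    by (rule order_trans[OF norm3 mono3[OF order_refl nXX order_refl norm_ge_zero norm_ge_zero norm_ge_zero]])
  have "norm (Z (Suc n) o\<^sub>L R 0) \<le> 1 * xp * norm (R 0) + norm (Z n o\<^sub>L R 1) + norm (Z n o\<^sub>L R 1) * xp * norm (R 0)"
    unfolding eq by (rule order_trans[OF norm_add3 add_mono[OF add_mono[OF n1 order_refl] n3]])
  then show ?thesis by (simp add: algebra_simps)
qed

lemma Z_split: "Z n = (Z n o\<^sub>L P) + (Z n o\<^sub>L R 0)"
  by (simp add: R_def cdiff_right flip: cadd_right)

lemma F_bound:
  fixes G :: "nat \<Rightarrow> 'a op" and eb d :: real
  assumes G0: "G 0 = id_blinfun" and GS: "\<And>j. G (Suc j) = G j o\<^sub>L G 1"
    and dd: "norm ((P o\<^sub>L T o\<^sub>L P) - (G 1 o\<^sub>L P)) \<le> d"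
  shows "(\<forall>j<n. norm (G j) \<le> eb) \<Longrightarrow> norm ((P o\<^sub>L S n) - (G n o\<^sub>L P)) \<le> real n * eb * d"
proof (induction n)
  case 0 then show ?case by (simp add: S_def G0)
next
  case (Suc n)
  have IH: "norm ((P o\<^sub>L S n) - (G n o\<^sub>L P)) \<le> real n * eb * d" using Suc by simp
  have Gn: "norm (G n) \<le> eb" using Suc by simp
  have eq: "(P o\<^sub>L S (Suc n)) - (G (Suc n) o\<^sub>L P) =
     (((P o\<^sub>L S n) - (G n o\<^sub>L P)) o\<^sub>L (P o\<^sub>L T o\<^sub>L P)) + (G n o\<^sub>L ((P o\<^sub>L T o\<^sub>L P) - (G 1 o\<^sub>L P)))"
  proof -
    have 2: "P o\<^sub>L S (Suc n) = (P o\<^sub>L S n) o\<^sub>L (P o\<^sub>L T o\<^sub>L P)"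
      by (simp only: S_def opow_Suc_right cassoc)
    have 3: "(G n o\<^sub>L P) o\<^sub>L (P o\<^sub>L T o\<^sub>L P) = G n o\<^sub>L (P o\<^sub>L T o\<^sub>L P)"
      by (simp only: cassoc PP')
    have 4: "G (Suc n) o\<^sub>L P = G n o\<^sub>L (G 1 o\<^sub>L P)" by (simp only: GS cassoc)
    show ?thesis unfolding 2 4 by (simp add: cdiff_left cdiff_right 3)
  qed
  have n1: "norm (((P o\<^sub>L S n) - (G n o\<^sub>L P)) o\<^sub>L (P o\<^sub>L T o\<^sub>L P)) \<le> real n * eb * d * 1"
    by (rule order_trans[OF norm_blinfun_compose mult_mono[OF IH nPTP]]) (simp_all add: order_trans[OF norm_ge_zero IH])
  have n2: "norm (G n o\<^sub>L ((P o\<^sub>L T o\<^sub>L P) - (G 1 o\<^sub>L P))) \<le> eb * d"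
    by (rule order_trans[OF norm_blinfun_compose mult_mono[OF Gn dd]]) (simp_all add: order_trans[OF norm_ge_zero Gn])
  have "norm ((P o\<^sub>L S (Suc n)) - (G (Suc n) o\<^sub>L P)) \<le> real n * eb * d * 1 + eb * d"
    unfolding eq by (rule order_trans[OF norm_triangle_ineq add_mono[OF n1 n2]])
  then show ?case by (simp add: algebra_simps)
qed


lemma total_bound:
  fixes G :: "nat \<Rightarrow> 'a op" and eb d \<alpha> :: real
  assumes G0: "G 0 = id_blinfun" and GS: "\<And>j. G (Suc j) = G j o\<^sub>L G 1"
    and dd: "norm ((P o\<^sub>L T o\<^sub>L P) - (G 1 o\<^sub>L P)) \<le> d"
    and Gb: "\<forall>j<Suc m. norm (G j) \<le> eb"
    and a0: "0 \<le> \<alpha>" and aa: "\<delta> * (xp * c * (1 + \<alpha>) + \<alpha>) \<le> \<alpha>"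
    and rho1: "\<delta> * (1 + c * xp) < 1"
  shows "norm (Z (Suc m) - (G (Suc m) o\<^sub>L P)) \<le>
     xp * (real (Suc m) * \<alpha> + c * \<delta> / (1 - \<delta> * (1 + c * xp))) + real (Suc m) * eb * d
     + (xp * norm (R 0) + (\<alpha> + c * \<delta> * (\<delta> * (1 + c * xp)) ^ m) * (1 + xp * norm (R 0)))"
proof -
  let ?\<rho> = "\<delta> * (1 + c * xp)"
  have \<nu>: "norm (Z j o\<^sub>L R 1) \<le> \<alpha> + c * \<delta> * ?\<rho> ^ j" for j
    using N_bound[OF a0 aa, of j] by (auto dest: spec[of _ 0])
  have r0: "0 \<le> ?\<rho>" using d0 c0 xp0 by simp
  have geo: "(\<Sum>j<Suc m. ?\<rho> ^ j) \<le> 1 / (1 - ?\<rho>)"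
    by (rule geo_le[OF r0 rho1])
  have sumE: "(\<Sum>j<Suc m. norm (Z j o\<^sub>L R 1)) \<le> real (Suc m) * \<alpha> + c * \<delta> / (1 - ?\<rho>)"
  proof -
    have "(\<Sum>j<Suc m. norm (Z j o\<^sub>L R 1)) \<le> (\<Sum>j<Suc m. \<alpha> + c * \<delta> * ?\<rho> ^ j)"
      by (rule sum_mono) (rule \<nu>)
    also have "\<dots> = real (Suc m) * \<alpha> + c * \<delta> * (\<Sum>j<Suc m. ?\<rho> ^ j)"
      by (simp add: sum.distrib sum_distrib_left del: sum.lessThan_Suc)
    also have "\<dots> \<le> real (Suc m) * \<alpha> + c * \<delta> * (1 / (1 - ?\<rho>))"
      using geo c0 d0 by (intro add_left_mono mult_left_mono) simp_all
    finally show ?thesis by simp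
  qed
  have E: "norm ((Z (Suc m) o\<^sub>L P) - (P o\<^sub>L S (Suc m))) \<le> xp * (real (Suc m) * \<alpha> + c * \<delta> / (1 - ?\<rho>))"
    by (rule order_trans[OF E_bound mult_left_mono[OF sumE xp0]])
  have F: "norm ((P o\<^sub>L S (Suc m)) - (G (Suc m) o\<^sub>L P)) \<le> real (Suc m) * eb * d"
    by (rule F_bound[OF G0 GS dd Gb])
  have W: "norm (Z (Suc m) o\<^sub>L R 0) \<le> xp * norm (R 0) + (\<alpha> + c * \<delta> * ?\<rho> ^ m) * (1 + xp * norm (R 0))"
    by (rule order_trans[OF W_bound add_left_mono[OF mult_right_mono[OF \<nu>]]]) (simp add: xp0)
  have eq: "Z (Suc m) - (G (Suc m) o\<^sub>L P) = ((Z (Suc m) o\<^sub>L P) - (P o\<^sub>L S (Suc m))) + ((P o\<^sub>L S (Suc m)) - (G (Suc m) o\<^sub>L P)) + (Z (Suc m) o\<^sub>L R 0)"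
    by (subst Z_split[of "Suc m"]) (simp add: algebra_simps)
  show ?thesis
    unfolding eq by (rule order_trans[OF norm_add3 add_mono[OF add_mono[OF E F] W]])
qed

end


lemma exp_facts:
  fixes x :: real
  assumes "0 \<le> x" "x \<le> 1/20"
  shows "x \<le> exp x - 1" "exp x - 1 \<le> x + x^2" "2*(exp x - 1 - x) \<le> x^2 * exp x"
proof -
  show "x \<le> exp x - 1" using exp_ge_add_one_self[of x] by linarith
  show "exp x - 1 \<le> x + x^2" using exp_bound[of x] assms by simp
  obtain t where t: "\<bar>t\<bar> \<le> \<bar>x\<bar>" "exp x = (\<Sum>m<2. x ^ m / fact m) + exp t / fact 2 * x ^ 2"
    using Maclaurin_exp_le[of x 2] by blast
  have e: "exp x - 1 - x = exp t / 2 * x^2" using t(2) by (simp add: numeral_2_eq_2)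
  have "exp t \<le> exp x" using t(1) assms by simp
  then have "exp t * x^2 \<le> exp x * x^2" by (rule mult_right_mono) simp
  then show "2*(exp x - 1 - x) \<le> x^2 * exp x" unfolding e by (simp add: mult.commute)
qed

lemma sq_le_exp: "0 \<le> (w::real) \<Longrightarrow> w^2 / 2 \<le> exp w"
  using exp_lower_Taylor_quadratic[of w] by simp


lemma cp_mono: "1 \<le> cp \<Longrightarrow> 0 \<le> c \<Longrightarrow> 0 \<le> u \<Longrightarrow> 6 * c * u \<le> 6 * cp * c * (u::real)"
  using mult_right_mono[of 1 cp "6*c*u"] by (simp add: mult_ac)

lemma Dlow:
  fixes \<delta> \<delta>' c cp u :: real and n :: nat
  assumes "0 < \<delta>" "\<delta> < \<delta>'" "\<delta>' < 1" "0 < c" "1 \<le> cp" "0 \<le> u"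
  shows "2 * ((\<delta> / (1 - \<delta>)) * exp (6 * c * u / (1 - \<delta>))) / real n
         \<le> 2 * ((\<delta>' / (1 - \<delta>')) * exp (6 * cp * c * u / (\<delta>' - \<delta>))) / real n"
proof -
  have f: "\<delta> / (1 - \<delta>) \<le> \<delta>' / (1 - \<delta>')"
    using assms by (intro frac_le) auto
  have "6 * c * u / (1 - \<delta>) \<le> 6 * c * u / (\<delta>' - \<delta>)"
    using assms by (intro divide_left_mono) auto
  also have "\<dots> \<le> 6 * cp * c * u / (\<delta>' - \<delta>)"
    by (rule divide_right_mono[OF cp_mono]) (use assms in auto)
  finally have "exp (6 * c * u / (1 - \<delta>)) \<le> exp (6 * cp * c * u / (\<delta>' - \<delta>))" by simp
  then have "(\<delta> / (1 - \<delta>)) * exp (6 * c * u / (1 - \<delta>)) \<le> (\<delta>' / (1 - \<delta>')) * exp (6 * cp * c * u / (\<delta>' - \<delta>))"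
    using f assms by (intro mult_mono) auto
  then show ?thesis by (intro divide_right_mono mult_left_mono) auto
qed

lemma Dlow2:
  fixes \<delta> \<delta>' c cp u x xp :: real and n :: nat
  assumes "0 < \<delta>" "\<delta> < \<delta>'" "\<delta>' < 1" "0 < c" "1 \<le> cp" "0 < x" "u = real n * x"
    "\<delta>' - \<delta> < \<delta> * c * xp" "xp \<le> 21/20 * x" "n \<ge> 1"
  shows "2 * (\<delta> * exp (3 * real n)) / real n
         \<le> 2 * ((\<delta>' / (1 - \<delta>')) * exp (6 * cp * c * u / (\<delta>' - \<delta>))) / real n"
proof -
  have "0 < \<delta> * c * xp" using assms by linarith
  moreover have "0 < \<delta> * c" using assms by simp
  ultimately have xp0: "0 < xp" by (simp add: zero_less_mult_iff)
  have u0: "0 \<le> u" using assms by simp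
  have "\<delta> \<le> \<delta>'" using assms by simp
  also have "\<delta>' \<le> \<delta>' / (1 - \<delta>')"
    using assms by (simp add: le_divide_eq mult_le_cancel_left1)
  finally have f: "\<delta> \<le> \<delta>' / (1 - \<delta>')" .
  have "3 * real n \<le> 6 * u / xp"
  proof -
    have "3 * real n * xp \<le> 3 * real n * (21/20 * x)" using assms by simp
    also have "\<dots> \<le> 6 * u" using assms by simp
    finally show ?thesis using xp0 by (simp add: pos_le_divide_eq)
  qed
  also have "6 * u / xp \<le> 6 * u / (\<delta> * xp)"
  proof (rule divide_left_mono)
    show "\<delta> * xp \<le> xp" using assms xp0 by (simp add: mult_le_cancel_right1)
  qed (use assms xp0 in auto)
  also have "\<dots> = 6 * c * u / (\<delta> * c * xp)" using assms by simp
  also have "\<dots> \<le> 6 * c * u / (\<delta>' - \<delta>)"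
    by (rule divide_left_mono) (use assms u0 in auto)
  also have "\<dots> \<le> 6 * cp * c * u / (\<delta>' - \<delta>)"
    by (rule divide_right_mono[OF cp_mono]) (use assms u0 in auto)
  finally have "exp (3 * real n) \<le> exp (6 * cp * c * u / (\<delta>' - \<delta>))" by simp
  then have "\<delta> * exp (3 * real n) \<le> (\<delta>' / (1 - \<delta>')) * exp (6 * cp * c * u / (\<delta>' - \<delta>))"
    by (rule mult_mono[OF f]) (use assms in auto)
  then show ?thesis by (intro divide_right_mono mult_left_mono) auto
qed


lemma TC_bound:
  fixes x xp c \<delta> \<delta>' cp Dv :: real and n m N0 :: nat
  assumes nm: "n = Suc m" and u: "u = real n * x" and x0: "0 \<le> x"
    and x3: "x * (2^(N0+1) * c) \<le> 1" and N0: "4*c \<le> real N0"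
    and xp0: "0 \<le> xp" and xp105: "xp \<le> 21/20 * x" and cxp1: "c * xp \<le> 1"
    and rho1: "\<delta> * (1 + c * xp) \<le> 1"
    and d0: "0 < \<delta>" "\<delta> < \<delta>'" "\<delta>' < 1" and c1: "1 < c" and cp: "1 \<le> cp"
    and Dv: "Dv = 2 * ((\<delta>' / (1 - \<delta>')) * exp (6 * cp * c * u / (\<delta>' - \<delta>))) / real n"
  shows "111/100 * (c * \<delta> * (\<delta> * (1 + c * xp)) ^ m) \<le> 2 * c / (\<delta>' - \<delta>) * \<delta>' ^ n + Dv / 4"
proof -
  let ?\<rho> = "\<delta> * (1 + c * xp)"
  have s0: "0 < \<delta>' - \<delta>" "\<delta>' - \<delta> \<le> 1" using d0 by auto
  have Dv0: "0 \<le> Dv" unfolding Dv using d0 by simp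
  have C0: "0 \<le> 2 * c / (\<delta>' - \<delta>) * \<delta>' ^ n" using d0 c1 by simp
  have r0: "\<delta> \<le> ?\<rho>" using d0 c1 xp0 by simp
  show ?thesis
  proof (cases "?\<rho> \<le> \<delta>'")
    case True
    have "c * \<delta> * ?\<rho> ^ m \<le> c * (?\<rho> * ?\<rho> ^ m)"
      using r0 c1 d0 by (simp add: mult_right_mono mult.assoc)
    also have "\<dots> = c * ?\<rho> ^ n" using nm by simp
    also have "\<dots> \<le> c * \<delta>' ^ n"
      using True r0 d0 c1 by (intro mult_left_mono power_mono) auto
    finally have 1: "111/100 * (c * \<delta> * ?\<rho> ^ m) \<le> 111/100 * (c * \<delta>' ^ n)"
      by (rule mult_left_mono) simp
    have q0: "0 \<le> c * \<delta>' ^ n" using c1 d0 by simp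
    have "111/100 * (c * \<delta>' ^ n) \<le> 2 * (c * \<delta>' ^ n)" using q0 by simp
    also have "\<dots> = 2 * (c * \<delta>' ^ n) / 1" by simp
    also have "\<dots> \<le> 2 * (c * \<delta>' ^ n) / (\<delta>' - \<delta>)"
      by (rule divide_left_mono) (use s0 q0 in auto)
    also have "\<dots> = 2 * c / (\<delta>' - \<delta>) * \<delta>' ^ n" by simp
    finally have "111/100 * (c * \<delta>' ^ n) \<le> 2 * c / (\<delta>' - \<delta>) * \<delta>' ^ n" .
    with 1 Dv0 show ?thesis by linarith
  next
    case False
    then have sl: "\<delta>' - \<delta> < \<delta> * c * xp" by (simp add: algebra_simps)
    have "0 < \<delta> * c * xp" using sl d0 by linarith
    moreover have "0 < \<delta> * c" using d0 c1 by simp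
    ultimately have xpp: "0 < xp" by (simp add: zero_less_mult_iff)
    have xpos: "0 < x" using xpp xp105 by linarith
    show ?thesis
    proof (cases "m < N0")
      case True
      have "(1 + c * xp) ^ m \<le> 2 ^ m" using cxp1 xp0 c1 by (intro power_mono) auto
      also have "(2::real) ^ m \<le> 2 ^ N0" using True by (intro power_increasing) auto
      finally have p2: "(1 + c * xp) ^ m \<le> 2 ^ N0" .
      have "c * 2 ^ N0 * xp \<le> c * 2 ^ N0 * (21/20 * x)"
        using xp105 c1 by (intro mult_left_mono) auto
      also have "\<dots> = 21/40 * (x * (2^(N0+1) * c))" by (simp add: algebra_simps)
      also have "\<dots> \<le> 21/40" using x3 by (simp only: mult_le_cancel_left1)
      finally have k: "c * 2 ^ N0 * xp \<le> 21/40" .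
      have "111/100 * (c * \<delta> * ?\<rho> ^ m) = 111/100 * c * \<delta> * \<delta> ^ m * (1 + c * xp) ^ m"
        by (simp add: power_mult_distrib)
      also have "\<dots> \<le> 111/100 * c * \<delta> * \<delta> ^ m * 2 ^ N0"
        using p2 d0 c1 by (intro mult_left_mono) auto
      also have "\<dots> = (111/100 * \<delta>) * (c * 2 ^ N0 * xp) * (\<delta> ^ m / xp)"
        using xpp by (simp add: field_simps)
      also have "\<dots> \<le> (111/100) * (21/40) * (\<delta> ^ m / xp)"
        using d0 k xpp c1 by (intro mult_mono) auto
      also have "\<dots> \<le> 2 * c * \<delta> ^ n / (\<delta> * c * xp)"
        using nm d0 c1 xpp by (simp add: field_simps)
      also have "\<dots> \<le> 2 * c * \<delta>' ^ n / (\<delta>' - \<delta>)"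
      proof (rule frac_le)
        show "2 * c * \<delta> ^ n \<le> 2 * c * \<delta>' ^ n" using d0 c1 by (intro mult_left_mono power_mono) auto
      qed (use d0 c1 s0 sl in auto)
      also have "\<dots> = 2 * c / (\<delta>' - \<delta>) * \<delta>' ^ n" by simp
      finally show ?thesis using Dv0 by linarith
    next
      case False
      have nN: "4 * c \<le> real n" using False N0 nm by simp
      have "?\<rho> ^ m \<le> 1" using rho1 r0 d0 by (intro power_le_one) auto
      then have "111/100 * (c * \<delta> * ?\<rho> ^ m) \<le> 111/100 * (c * \<delta>)"
        using c1 d0 by (simp add: mult_left_le)
      also have "\<dots> \<le> 2 * (\<delta> * exp (3 * real n)) / real n / 4"
      proof -
        have e: "(3 * real n)^2 / 2 \<le> exp (3 * real n)" by (rule sq_le_exp) simp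
        have "111/100 * c * real n \<le> 111/100 * (real n / 4) * real n"
          using nN by (intro mult_right_mono) auto
        also have "\<dots> \<le> (3 * real n)^2 / 2 / 2" by (simp add: power2_eq_square)
        also have "\<dots> \<le> exp (3 * real n) / 2" using e by simp
        finally have "111/100 * c * real n \<le> exp (3 * real n) / 2" .
        then have "111/100 * c * real n * \<delta> \<le> exp (3 * real n) / 2 * \<delta>"
          using d0 by (intro mult_right_mono) auto
        then show ?thesis using nm by (simp add: field_simps)
      qed
      also have "\<dots> \<le> Dv / 4"
      proof -
        have "2 * (\<delta> * exp (3 * real n)) / real n \<le> Dv"
          unfolding Dv by (rule Dlow2[OF d0 _ cp xpos u sl xp105]) (use c1 nm in auto)
        then show ?thesis by (rule divide_right_mono) simp
      qed
      finally show ?thesis using C0 by linarith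
    qed
  qed
qed


lemma lin_comb:
  fixes a1 a2 a3 a4 A1 e1 f1 f2 g1 g2 h1 h2 Q Dv Cc Bb :: real
  shows "a1 \<le> A1 + e1 \<Longrightarrow> a2 \<le> f1 + f2 \<Longrightarrow> a3 \<le> g1 + g2 \<Longrightarrow> a4 + e1 \<le> h1 + h2 \<Longrightarrow>
    h2 \<le> Q / 2 \<Longrightarrow> f1 + g2 + g1 \<le> Q \<Longrightarrow> 2 * Q \<le> Dv \<Longrightarrow> f2 \<le> Cc + Dv / 4 \<Longrightarrow> h1 \<le> Bb \<Longrightarrow>
    a3 + a4 + (a1 + a2) \<le> A1 + Bb + Cc + Dv"
  by linarith

lemma main_real:
  fixes x xp u c \<delta> \<delta>' cp eb :: real and n m N0 :: nat
  assumes nm: "n = Suc m" and u: "u = real n * x" and x0: "0 \<le> x" and x1: "x \<le> 1/20"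
    and x2: "x * (12 * c) \<le> 1 - \<delta>" and x3: "x * (2^(N0+1) * c) \<le> 1" and x4: "x \<le> \<delta>"
    and N0: "4*c \<le> real N0" and xp: "xp = exp x - 1"
    and d0: "0 < \<delta>" "\<delta> < \<delta>'" "\<delta>' < 1" and c1: "1 < c" and cp: "1 \<le> cp" "cp \<le> 2"
    and eb: "0 \<le> eb" "eb \<le> exp u"
  shows "xp * (real n * (2*c*\<delta>/(1-\<delta>)*xp) + c*\<delta>/(1 - \<delta>*(1+c*xp))) + real n * eb * (2*(exp x - 1 - x))
   + (xp*cp + (2*c*\<delta>/(1-\<delta>)*xp + c*\<delta>*(\<delta>*(1+c*xp))^m) * (1 + xp*cp))
   \<le> cp*x + (cp + (1+eb)*(1+cp^2))/2 * (u^2/real n) + 2*c/(\<delta>'-\<delta>)*\<delta>'^n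
     + 2*((\<delta>'/(1-\<delta>'))*exp(6*cp*c*u/(\<delta>'-\<delta>)))/real n"
proof -
  define g where "g = 1 / (1 - \<delta>)"
  define \<rho> where "\<rho> = \<delta> * (1 + c * xp)"
  define \<alpha> where "\<alpha> = 2 * c * \<delta> * g * xp"
  define Dv where "Dv = 2*((\<delta>'/(1-\<delta>'))*exp(6*cp*c*u/(\<delta>'-\<delta>)))/real n"
  define E where "E = exp (6 * c * u / (1 - \<delta>))"
  have npos: "1 \<le> real n" using nm by simp
  have u0: "0 \<le> u" using u x0 by simp
  have g1: "1 \<le> g" unfolding g_def using d0 by simp
  have gd: "\<delta> / (1 - \<delta>) = \<delta> * g" unfolding g_def by simp
  have ae: "2*c*\<delta>/(1-\<delta>)*xp = \<alpha>" unfolding \<alpha>_def g_def by simp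
  have xl: "x \<le> xp" and xu: "xp \<le> x + x^2" and xd: "2*(exp x - 1 - x) \<le> x^2 * exp x"
    using exp_facts[OF x0 x1] xp by auto
  have "x^2 \<le> x * (1/20)" unfolding power2_eq_square by (rule mult_left_mono[OF x1 x0])
  then have xp105: "xp \<le> 21/20 * x" using xu by simp
  have xp0: "0 \<le> xp" using xl x0 by simp
  have "c * xp \<le> c * (21/20 * x)" using xp105 c1 by (intro mult_left_mono) auto
  also have "\<dots> = 21/20 * (x * c)" by simp
  also have "\<dots> \<le> 21/20 * ((1 - \<delta>) / 12)"
  proof -
    have "12 * (x * c) \<le> 1 - \<delta>" using x2 by (simp add: mult_ac)
    then have "x * c \<le> (1 - \<delta>) / 12" by (simp add: le_divide_eq mult.commute)
    then show ?thesis by (rule mult_left_mono) simp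
  qed
  finally have cxp': "c * xp \<le> 21/20 * ((1 - \<delta>) / 12)" .
  have "c * xp * 240 \<le> 21 - 21 * \<delta>" using cxp' by (simp add: field_simps)
  then have "11 * (c * xp) \<le> 1 - \<delta>" using d0 by (simp add: algebra_simps)
  then have cxp: "c * xp \<le> (1 - \<delta>) / 11" by (simp add: field_simps)
  have cxp0: "0 \<le> c * xp" using c1 xp0 by simp
  have cxp1: "c * xp \<le> 1" using cxp d0 by simp
  have "\<rho> = \<delta> + \<delta> * (c * xp)" unfolding \<rho>_def by (simp add: algebra_simps)
  also have "\<delta> * (c * xp) \<le> c * xp" using d0 cxp0 by (simp add: mult_left_le_one_le)
  finally have rho_le': "\<rho> \<le> \<delta> + c * xp" by simp
  have cxp11: "11 * (c * xp) \<le> 1 - \<delta>" using cxp by (simp add: field_simps)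
  have rho1: "\<rho> \<le> 1" using rho_le' cxp11 d0 by linarith
  have rho0: "0 \<le> \<rho>" unfolding \<rho>_def using d0 cxp0 by simp
  have omr0: "10 * (1 - \<delta>) \<le> 11 * (1 - \<rho>)" using rho_le' cxp11 by (simp add: algebra_simps)
  have omr: "10/11 * (1 - \<delta>) \<le> 1 - \<rho>" using omr0 by (simp add: field_simps)
  have inv: "1 / (1 - \<rho>) \<le> 11/10 * g"
  proof -
    have "1 / (1 - \<rho>) \<le> 1 / (10/11 * (1 - \<delta>))"
      using omr d0 by (intro divide_left_mono) auto
    also have "\<dots> = 11/10 * g" unfolding g_def by simp
    finally show ?thesis .
  qed
  have "xp * cp \<le> (21/20 * (1/20)) * 2"
    using xp105 x1 cp xp0 by (intro mult_mono) auto
  then have xcp: "xp * cp \<le> 21/200" by simp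
  have xcp0: "0 \<le> xp * cp" using xp0 cp by simp
  have a0: "0 \<le> \<alpha>" unfolding \<alpha>_def using c1 d0 g1 xp0 by simp
  have t0: "0 \<le> c * \<delta> * \<rho> ^ m" using c1 d0 rho0 by simp
  have b1: "xp * cp \<le> cp * x + 2 * (xp - x)"
  proof -
    have "xp * cp = cp * x + cp * (xp - x)" by (simp add: algebra_simps)
    also have "cp * (xp - x) \<le> 2 * (xp - x)" using cp xl by (intro mult_right_mono) auto
    finally show ?thesis by simp
  qed
  have b2: "(\<alpha> + c * \<delta> * \<rho> ^ m) * (1 + xp * cp) \<le> 111/100 * \<alpha> + 111/100 * (c * \<delta> * \<rho> ^ m)"
  proof -
    have "(\<alpha> + c * \<delta> * \<rho> ^ m) * (1 + xp * cp) \<le> (\<alpha> + c * \<delta> * \<rho> ^ m) * (111/100)"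
      using xcp a0 t0 by (intro mult_left_mono) auto
    then show ?thesis by (simp add: algebra_simps)
  qed
  have b3: "xp * (real n * \<alpha> + c * \<delta> / (1 - \<rho>)) \<le> real n * xp * \<alpha> + xp * (c * \<delta>) * (11/10 * g)"
  proof -
    have "c * \<delta> / (1 - \<rho>) = (c * \<delta>) * (1 / (1 - \<rho>))" by simp
    also have "\<dots> \<le> (c * \<delta>) * (11/10 * g)" using inv c1 d0 by (intro mult_left_mono) auto
    finally have "xp * (c * \<delta> / (1 - \<rho>)) \<le> xp * ((c * \<delta>) * (11/10 * g))"
      using xp0 by (intro mult_left_mono) auto
    then show ?thesis by (simp add: algebra_simps)
  qed
  have b4: "real n * eb * (2*(exp x - 1 - x)) + 2 * (xp - x) \<le> real n * x^2 * (1 + eb) + real n * x^2 * (1 + eb) * xp"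
  proof -
    have dd: "2*(exp x - 1 - x) = 2 * (xp - x)" using xp by simp
    have "real n * eb * (2*(exp x - 1 - x)) + 2 * (xp - x) = (1 + real n * eb) * (2*(exp x - 1 - x))"
      using dd by (simp add: algebra_simps)
    also have "\<dots> \<le> (1 + real n * eb) * (x^2 * exp x)"
      using xd eb npos by (intro mult_left_mono) auto
    also have "\<dots> \<le> (real n * (1 + eb)) * (x^2 * exp x)"
      using npos eb by (intro mult_right_mono) (auto simp: algebra_simps)
    also have "\<dots> = real n * x^2 * (1 + eb) + real n * x^2 * (1 + eb) * xp"
    proof -
      have ex: "exp x = 1 + xp" using xp by simp
      show ?thesis unfolding ex by (simp add: algebra_simps)
    qed
    finally show ?thesis .
  qed
  have b5: "real n * x^2 * (1 + eb) * xp \<le> \<delta> * g * E / real n / 2"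
  proof -
    have e1: "1 \<le> exp u" using u0 by simp
    have "real n * x^2 * (1 + eb) * xp \<le> real n * x^2 * (2 * exp u) * (21/20 * x)"
    proof -
      have "1 + eb \<le> 2 * exp u" using e1 eb by linarith
      then show ?thesis using eb xp105 xp0 x0 npos by (intro mult_mono) auto
    qed
    also have "\<dots> = 21/10 * exp u * (u^2) * x / real n"
      using u npos by (simp add: power2_eq_square field_simps)
    also have "\<dots> \<le> 21/10 * exp u * (2/25 * exp (5 * u)) * x / real n"
    proof -
      have "(5 * u)^2 / 2 \<le> exp (5 * u)" by (rule sq_le_exp) (use u0 in simp)
      then have "u^2 \<le> 2/25 * exp (5 * u)" by (simp add: power_mult_distrib)
      then show ?thesis using x0 npos by (intro divide_right_mono mult_right_mono mult_left_mono) auto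
    qed
    also have "\<dots> = 21/125 * exp (6 * u) * x / real n"
    proof -
      have "exp u * exp (5 * u) = exp (6 * u)" by (simp add: mult_exp_exp)
      then show ?thesis by (simp add: algebra_simps)
    qed
    also have "\<dots> \<le> 21/125 * exp (6 * u) * \<delta> / real n"
      using x4 npos by (intro divide_right_mono mult_left_mono) auto
    also have "\<dots> \<le> 1/2 * E * (\<delta> * g) / real n"
    proof -
      have "6 * u \<le> 6 * c * u / (1 - \<delta>)"
      proof -
        have "6 * u \<le> 6 * c * u" using c1 u0 by (simp add: mult_le_cancel_left1 mult_le_cancel_right1)
        also have "\<dots> \<le> 6 * c * u / (1 - \<delta>)"
          using divide_left_mono[of "1 - \<delta>" 1 "6 * c * u"] d0 c1 u0 by simp
        finally show ?thesis .
      qed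
      then have "exp (6 * u) \<le> E" unfolding E_def by simp
      moreover have "\<delta> \<le> \<delta> * g" using g1 d0 by simp
      moreover have "0 \<le> E" unfolding E_def by simp
      ultimately show ?thesis using d0 npos by (intro divide_right_mono mult_mono) auto
    qed
    finally show ?thesis by (simp add: mult_ac)
  qed
  have b6: "111/100 * \<alpha> + xp * (c * \<delta>) * (11/10 * g) + real n * xp * \<alpha> \<le> \<delta> * g * E / real n"
  proof -
    have "111/100 * \<alpha> + xp * (c * \<delta>) * (11/10 * g) = 332/100 * (c * \<delta> * g) * xp"
      unfolding \<alpha>_def by (simp add: algebra_simps)
    also have "\<dots> \<le> 332/100 * (c * \<delta> * g) * (21/20 * x)"
      using xp105 c1 d0 g1 by (intro mult_left_mono) auto
    also have "\<dots> \<le> 6 * (c * \<delta> * g) * g * x"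
    proof -
      have "332/100 * (21/20) * x \<le> 6 * g * x" using g1 x0 by (intro mult_right_mono) auto
      then show ?thesis using c1 d0 g1 by (auto simp: algebra_simps intro!: mult_left_mono[of _ _ "c*\<delta>*g", simplified mult_ac])
    qed
    finally have L: "111/100 * \<alpha> + xp * (c * \<delta>) * (11/10 * g) \<le> 6 * (c * \<delta> * g) * g * x" .
    have "real n * xp * \<alpha> = 2 * (c * \<delta> * g) * real n * (xp * xp)" unfolding \<alpha>_def by (simp add: algebra_simps)
    also have "\<dots> \<le> 2 * (c * \<delta> * g) * real n * ((21/20 * x) * (21/20 * x))"
      using xp105 xp0 c1 d0 g1 npos by (intro mult_left_mono mult_mono) auto
    also have "\<dots> \<le> 18 * (c * \<delta> * g) * (c * g * g) * real n * (x * x)"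
    proof -
      have cg: "1 \<le> c * g * g"
      proof -
        have "1 * 1 \<le> c * g" using c1 g1 by (intro mult_mono) auto
        then have "1 * 1 \<le> (c * g) * g" using g1 c1 by (intro mult_mono) auto
        then show ?thesis by simp
      qed
      have xx0: "0 \<le> x * x" using x0 by simp
      have "2 * (21/20 * x) * (21/20 * x) = 441/200 * (x * x)" by simp
      also have "\<dots> \<le> 18 * (x * x) * 1" using xx0 by simp
      also have "\<dots> \<le> 18 * (x * x) * (c * g * g)" using xx0 cg by (intro mult_left_mono) auto
      finally have h: "2 * (21/20 * x) * (21/20 * x) \<le> 18 * (x * x) * (c * g * g)" .
      have p0: "0 \<le> c * \<delta> * g * real n" using c1 d0 g1 by simp
      from mult_left_mono[OF h p0] show ?thesis by (simp add: mult_ac)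
    qed
    finally have Q: "real n * xp * \<alpha> \<le> 18 * (c * \<delta> * g) * (c * g * g) * real n * (x * x)" .
    define y where "y = 6 * c * u / (1 - \<delta>)"
    have y0: "0 \<le> y" unfolding y_def using c1 u0 d0 by simp
    have ye: "y = 6 * c * g * real n * x" unfolding y_def g_def using u by simp
    have "6 * (c * \<delta> * g) * g * x + 18 * (c * \<delta> * g) * (c * g * g) * real n * (x * x)
          = \<delta> * g * (y + y^2 / 2) / real n"
      unfolding ye using npos by (simp add: power2_eq_square field_simps)
    also have "\<dots> \<le> \<delta> * g * E / real n"
    proof -
      have "y + y^2/2 \<le> E" unfolding E_def y_def[symmetric] using exp_lower_Taylor_quadratic[OF y0] by simp
      then show ?thesis using d0 g1 npos by (intro divide_right_mono mult_left_mono) auto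
    qed
    finally show ?thesis using L Q by linarith
  qed
  have b7: "2 * (\<delta> * g * E) / real n \<le> Dv"
    unfolding Dv_def E_def using Dlow[OF d0 _ cp(1) u0, of c n] c1 gd by simp
  have b8: "111/100 * (c * \<delta> * \<rho> ^ m) \<le> 2 * c / (\<delta>' - \<delta>) * \<delta>' ^ n + Dv / 4"
    unfolding \<rho>_def
    by (rule TC_bound[OF nm u x0 x3 N0 xp0 xp105 cxp1 rho1[unfolded \<rho>_def] d0 c1 cp(1) Dv_def])
  have b9: "real n * x^2 * (1 + eb) \<le> (cp + (1+eb)*(1+cp^2))/2 * (u^2/real n)"
  proof -
    have "u^2 / real n = real n * x^2" using u npos by (simp add: power2_eq_square)
    moreover have "1 + eb \<le> (cp + (1+eb)*(1+cp^2))/2"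
    proof -
      have "1 \<le> cp^2" using cp by (simp add: one_le_power)
      then have "(1 + eb) * 2 \<le> (1+eb)*(1+cp^2)" using eb by (intro mult_left_mono) auto
      then show ?thesis using cp by simp
    qed
    ultimately show ?thesis
    proof -
      assume e: "u^2 / real n = real n * x^2" and hb: "1 + eb \<le> (cp + (1+eb)*(1+cp^2))/2"
      have "real n * x^2 * (1 + eb) \<le> real n * x^2 * ((cp + (1+eb)*(1+cp^2))/2)"
        using hb npos by (intro mult_left_mono) auto
      also have "\<dots> = (cp + (1+eb)*(1+cp^2))/2 * (u^2/real n)" unfolding e by simp
      finally show ?thesis .
    qed
  qed
  have LHS: "xp * (real n * (2*c*\<delta>/(1-\<delta>)*xp) + c*\<delta>/(1 - \<delta>*(1+c*xp))) + real n * eb * (2*(exp x - 1 - x))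
   + (xp*cp + (2*c*\<delta>/(1-\<delta>)*xp + c*\<delta>*(\<delta>*(1+c*xp))^m) * (1 + xp*cp))
   = xp * (real n * \<alpha> + c * \<delta> / (1 - \<rho>)) + real n * eb * (2*(exp x - 1 - x))
   + (xp*cp + (\<alpha> + c * \<delta> * \<rho> ^ m) * (1 + xp * cp))"
    unfolding ae \<rho>_def by simp
  have Dv0: "0 \<le> Dv" unfolding Dv_def using d0 by simp
  have b7': "2 * (\<delta> * g * E / real n) \<le> Dv" using b7 by simp
  show ?thesis
    unfolding LHS Dv_def[symmetric]
    by (rule lin_comb[OF b1 b2 b3 b4 b5 b6 b7' b8 b9])
qed


lemma alpha_ok:
  fixes x xp c \<delta> :: real
  assumes x0: "0 \<le> x" and x1: "x \<le> 1/20" and x2: "x * (12 * c) \<le> 1 - \<delta>" and xp: "xp = exp x - 1"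
    and d0: "0 < \<delta>" "\<delta> < 1" and c1: "1 < c"
  shows "0 \<le> 2*c*\<delta>/(1-\<delta>)*xp" "\<delta> * (xp * c * (1 + 2*c*\<delta>/(1-\<delta>)*xp) + 2*c*\<delta>/(1-\<delta>)*xp) \<le> 2*c*\<delta>/(1-\<delta>)*xp"
    "\<delta> * (1 + c * xp) < 1"
proof -
  have xl: "x \<le> xp" and xu: "xp \<le> x + x^2" using exp_facts[OF x0 x1] xp by auto
  have "x^2 \<le> x * (1/20)" unfolding power2_eq_square by (rule mult_left_mono[OF x1 x0])
  then have xp105: "xp \<le> 21/20 * x" using xu by simp
  have xp0: "0 \<le> xp" using xl x0 by simp
  have "c * xp \<le> c * (21/20 * x)" using xp105 c1 by (intro mult_left_mono) auto
  also have "\<dots> = 21/20 * (x * c)" by simp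
  also have "\<dots> \<le> 21/20 * ((1 - \<delta>) / 12)"
  proof -
    have "12 * (x * c) \<le> 1 - \<delta>" using x2 by (simp add: mult_ac)
    then have "x * c \<le> (1 - \<delta>) / 12" by (simp add: le_divide_eq mult.commute)
    then show ?thesis by (rule mult_left_mono) simp
  qed
  finally have cxp': "c * xp \<le> 21/20 * ((1 - \<delta>) / 12)" .
  have "c * xp * 240 \<le> 21 - 21 * \<delta>" using cxp' by (simp add: field_simps)
  then have cxp11: "11 * (c * xp) \<le> 1 - \<delta>" using d0 by (simp add: algebra_simps)
  define \<alpha> where "\<alpha> = 2*c*\<delta>/(1-\<delta>)*xp"
  have ae: "\<alpha> * (1 - \<delta>) = 2 * \<delta> * (c * xp)" unfolding \<alpha>_def using d0 by (simp add: field_simps)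
  have a0: "0 \<le> \<alpha>" unfolding \<alpha>_def using d0 c1 xp0 by simp
  have "\<alpha> * (1 - \<delta>) \<le> 1 * (1 - \<delta>)"
  proof -
    have "2 * \<delta> * (c * xp) \<le> 2 * 1 * ((1 - \<delta>) / 11)"
      using cxp11 d0 c1 xp0 by (intro mult_mono) auto
    then show ?thesis unfolding ae using d0 by simp
  qed
  then have a1: "\<alpha> \<le> 1" using d0 by (simp add: mult_le_cancel_right)
  have "\<delta> * (xp * c * (1 + \<alpha>) + \<alpha>) = \<delta> * (c * xp) * (1 + \<alpha>) + \<delta> * \<alpha>" by (simp add: algebra_simps)
  also have "\<delta> * (c * xp) * (1 + \<alpha>) \<le> \<delta> * (c * xp) * 2"
    using a1 d0 c1 xp0 by (intro mult_left_mono) auto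
  also have "\<delta> * (c * xp) * 2 = \<alpha> * (1 - \<delta>)" using ae by simp
  finally have "\<delta> * (xp * c * (1 + \<alpha>) + \<alpha>) \<le> \<alpha>" by (simp add: algebra_simps)
  then show "\<delta> * (xp * c * (1 + 2*c*\<delta>/(1-\<delta>)*xp) + 2*c*\<delta>/(1-\<delta>)*xp) \<le> 2*c*\<delta>/(1-\<delta>)*xp"
    unfolding \<alpha>_def .
  show "0 \<le> 2*c*\<delta>/(1-\<delta>)*xp" using a0 unfolding \<alpha>_def .
  have "\<delta> * (1 + c * xp) = \<delta> + \<delta> * (c * xp)" by (simp add: algebra_simps)
  also have "\<delta> * (c * xp) \<le> c * xp" using d0 c1 xp0 by (simp add: mult_left_le_one_le)
  finally show "\<delta> * (1 + c * xp) < 1" using cxp11 d0 by simp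
qed

lemma le_zero_of_geom:
  fixes z a \<delta> :: real
  assumes "\<And>n. z \<le> a * \<delta> ^ n" "0 < \<delta>" "\<delta> < 1"
  shows "z \<le> 0"
proof -
  have "(\<lambda>n. a * \<delta> ^ n) \<longlonglongrightarrow> a * 0"
    by (intro tendsto_mult tendsto_const LIMSEQ_power_zero) (use assms in simp)
  then show ?thesis using assms(1) by (intro LIMSEQ_le_const[of _ 0]) auto
qed


lemma mono_r: "0 \<le> a \<Longrightarrow> a \<le> b \<Longrightarrow> exp a - 1 - a \<le> exp b - 1 - (b::real)"
proof -
  assume h: "0 \<le> a" "a \<le> b"
  have "exp b = exp a * exp (b - a)" by (simp add: mult_exp_exp)
  also have "\<dots> \<ge> exp a * (1 + (b - a))" using h by (intro mult_left_mono) auto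
  finally have "exp a * (1 + (b - a)) \<le> exp b" .
  moreover have "b - a \<le> exp a * (b - a)" using h by (simp add: mult_le_cancel_right1)
  ultimately show ?thesis by (simp add: algebra_simps)
qed

theorem proposition3p4:
  fixes L M P :: "'a::banach \<Rightarrow>\<^sub>L 'a" and \<delta> c :: real
  assumes contractive_sg: "\<forall>t\<ge>0. norm (op_exp (t *\<^sub>R L)) \<le> 1"
    and M_contr: "norm M \<le> 1"
    and P_proj: "P o\<^sub>L P = P"
    and delta: "0 < \<delta>" "\<delta> < 1"
    and c_gt: "c > 1"
    and conv: "\<forall>n::nat. norm (opow n M - P) \<le> c * \<delta> ^ n"
  shows "\<exists>\<epsilon>>0. \<forall>t::real. \<forall>n::nat. \<forall>\<delta>'::real.
           0 \<le> t \<longrightarrow> n \<ge> 1 \<longrightarrow> t \<le> real n * \<epsilon> \<longrightarrow> \<delta> < \<delta>' \<longrightarrow> \<delta>' < 1 \<longrightarrow>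
           (let cp = norm (id_blinfun - P);
                nL = norm L;
                eb = (SUP s\<in>{0..t}. norm (op_exp (s *\<^sub>R (P o\<^sub>L L o\<^sub>L P))))
            in norm (opow n (M o\<^sub>L op_exp ((t / real n) *\<^sub>R L))
                     - (op_exp (t *\<^sub>R (P o\<^sub>L L o\<^sub>L P)) o\<^sub>L P))
               \<le> t * cp * nL / real n
                 + (cp + (1 + eb) * (1 + cp ^ 2)) / 2 * (t ^ 2 * nL ^ 2 / real n)
                 + 2 * c / (\<delta>' - \<delta>) * \<delta>' ^ n
                 + 2 * \<delta>' / (1 - \<delta>') * (exp (6 * t * cp * c * nL / (\<delta>' - \<delta>)) / real n))"
proof -
  have conv': "norm (opow k M - P) \<le> c * \<delta> ^ k" for k using conv by blast
  have c0: "0 \<le> c" using c_gt by simp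
  have dk: "c * \<delta> ^ Suc k \<le> c * \<delta> ^ k" for k
    using delta c0 by (intro mult_left_mono) (auto simp: power_decreasing)
  have MP: "M o\<^sub>L P = P"
  proof -
    have "norm ((M o\<^sub>L P) - P) \<le> 0"
    proof (rule le_zero_of_geom[OF _ delta])
      fix k
      have eq: "(M o\<^sub>L P) - P = (M o\<^sub>L (P - opow k M)) + (opow (Suc k) M - P)"
        by (simp add: cdiff_right)
      have "norm (M o\<^sub>L (P - opow k M)) \<le> norm M * norm (P - opow k M)" by (rule norm_blinfun_compose)
      also have "\<dots> \<le> 1 * (c * \<delta> ^ k)"
        using M_contr conv'[of k] c0 delta by (intro mult_mono) (auto simp: norm_minus_commute)
      finally have 1: "norm (M o\<^sub>L (P - opow k M)) \<le> c * \<delta> ^ k" by simp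
      have 2: "norm (opow (Suc k) M - P) \<le> c * \<delta> ^ k" using conv'[of "Suc k"] dk[of k] by linarith
      show "norm ((M o\<^sub>L P) - P) \<le> (2 * c) * \<delta> ^ k"
        unfolding eq using order_trans[OF norm_triangle_ineq add_mono[OF 1 2]] by simp
    qed
    then show ?thesis by simp
  qed
  have PM: "P o\<^sub>L M = P"
  proof -
    have "norm ((P o\<^sub>L M) - P) \<le> 0"
    proof (rule le_zero_of_geom[OF _ delta])
      fix k
      have eq: "(P o\<^sub>L M) - P = ((P - opow k M) o\<^sub>L M) + (opow (Suc k) M - P)"
        by (simp add: cdiff_left opow_Suc_right del: opow.simps)
      have "norm ((P - opow k M) o\<^sub>L M) \<le> norm (P - opow k M) * norm M" by (rule norm_blinfun_compose)
      also have "\<dots> \<le> (c * \<delta> ^ k) * 1"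
        using M_contr conv'[of k] c0 delta by (intro mult_mono) (auto simp: norm_minus_commute)
      finally have 1: "norm ((P - opow k M) o\<^sub>L M) \<le> c * \<delta> ^ k" by simp
      have 2: "norm (opow (Suc k) M - P) \<le> c * \<delta> ^ k" using conv'[of "Suc k"] dk[of k] by linarith
      show "norm ((P o\<^sub>L M) - P) \<le> (2 * c) * \<delta> ^ k"
        unfolding eq using order_trans[OF norm_triangle_ineq add_mono[OF 1 2]] by simp
    qed
    then show ?thesis by simp
  qed
  have nP: "norm P \<le> 1"
  proof -
    have "norm P - 1 \<le> 0"
    proof (rule le_zero_of_geom[OF _ delta])
      fix k
      have "norm P \<le> norm (opow k M) + norm (P - opow k M)"
        by (metis add.commute diff_add_cancel norm_triangle_ineq)
      also have "\<dots> \<le> 1 + c * \<delta> ^ k"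
        using norm_opow_le1[OF M_contr, of k] conv'[of k] by (simp add: norm_minus_commute add_mono)
      finally show "norm P - 1 \<le> c * \<delta> ^ k" by simp
    qed
    then show ?thesis by simp
  qed
  define K where "K = norm L"
  define N0 where "N0 = nat \<lceil>4 * c\<rceil>"
  define \<eta> where "\<eta> = min (1/20) (min ((1 - \<delta>) / (12 * c)) (min (1 / (2^(N0+1) * c)) \<delta>))"
  define \<epsilon> where "\<epsilon> = \<eta> / (K + 1)"
  have K0: "0 \<le> K" unfolding K_def by simp
  have N0c: "4 * c \<le> real N0" unfolding N0_def by linarith
  have \<eta>0: "0 < \<eta>" unfolding \<eta>_def using delta c_gt by simp
  have \<epsilon>0: "0 < \<epsilon>" unfolding \<epsilon>_def using \<eta>0 K0 by simp
  have \<eta>1: "\<eta> \<le> 1/20" "\<eta> * (12 * c) \<le> 1 - \<delta>" "\<eta> * (2^(N0+1) * c) \<le> 1" "\<eta> \<le> \<delta>"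
  proof -
    show "\<eta> \<le> 1/20" "\<eta> \<le> \<delta>" unfolding \<eta>_def by auto
    have "\<eta> \<le> (1 - \<delta>) / (12 * c)" unfolding \<eta>_def by auto
    then show "\<eta> * (12 * c) \<le> 1 - \<delta>" using c_gt by (simp add: le_divide_eq)
    have "\<eta> \<le> 1 / (2^(N0+1) * c)" unfolding \<eta>_def by auto
    then show "\<eta> * (2^(N0+1) * c) \<le> 1" using c_gt by (simp add: le_divide_eq)
  qed
  show ?thesis
  proof (intro exI[of _ \<epsilon>] conjI allI impI \<epsilon>0)
    fix t :: real and n :: nat and \<delta>' :: real
    assume t0: "0 \<le> t" and n1: "1 \<le> n" and tn: "t \<le> real n * \<epsilon>" and dd': "\<delta> < \<delta>'" "\<delta>' < 1"
    define \<tau> where "\<tau> = t / real n"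
    define x where "x = \<tau> * K"
    define T where "T = op_exp (\<tau> *\<^sub>R L)"
    define A where "A = P o\<^sub>L L o\<^sub>L P"
    define xp where "xp = exp x - 1"
    define cp where "cp = norm (id_blinfun - P)"
    define eb where "eb = (SUP s\<in>{0..t}. norm (op_exp (s *\<^sub>R A)))"
    define u where "u = real n * x"
    have npos: "0 < real n" using n1 by simp
    have \<tau>0: "0 \<le> \<tau>" unfolding \<tau>_def using t0 by simp
    have n\<tau>: "real n * \<tau> = t" unfolding \<tau>_def using npos by simp
    have ut: "u = t * K" unfolding u_def x_def using n\<tau> by (simp add: mult.assoc[symmetric])
    have x0: "0 \<le> x" unfolding x_def using \<tau>0 K0 by simp
    have x\<eta>: "x \<le> \<eta>"
    proof -
      have "\<tau> \<le> \<epsilon>" unfolding \<tau>_def using tn npos by (simp add: divide_le_eq mult.commute)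
      then have "x \<le> \<epsilon> * K" unfolding x_def using K0 by (simp add: mult_right_mono)
      also have "\<epsilon> * K = \<eta> * (K / (K + 1))" unfolding \<epsilon>_def by simp
      also have "\<dots> \<le> \<eta> * 1" using \<eta>0 K0 by (intro mult_left_mono) auto
      finally show ?thesis by simp
    qed
    have x1: "x \<le> 1/20" "x * (12 * c) \<le> 1 - \<delta>" "x * (2^(N0+1) * c) \<le> 1" "x \<le> \<delta>"
    proof -
      show "x \<le> 1/20" "x \<le> \<delta>" using x\<eta> \<eta>1 by auto
      have "x * (12 * c) \<le> \<eta> * (12 * c)" by (rule mult_right_mono[OF x\<eta>]) (use c_gt in simp)
      then show "x * (12 * c) \<le> 1 - \<delta>" using \<eta>1(2) by linarith
      have "x * (2^(N0+1) * c) \<le> \<eta> * (2^(N0+1) * c)" by (rule mult_right_mono[OF x\<eta>]) (use c_gt in simp)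
      then show "x * (2^(N0+1) * c) \<le> 1" using \<eta>1(3) by linarith
    qed
    have n\<tau>L: "norm (\<tau> *\<^sub>R L) = x" unfolding x_def K_def using \<tau>0 by simp
    have nA: "norm A \<le> K"
    proof -
      have "norm A \<le> norm P * norm L * norm P" unfolding A_def by (rule norm3)
      also have "\<dots> \<le> 1 * norm L * 1" using nP by (intro mult_mono) auto
      finally show ?thesis unfolding K_def by simp
    qed
    have nsA: "norm (s *\<^sub>R A) \<le> t * K" if "s \<in> {0..t}" for s
    proof -
      have "norm (s *\<^sub>R A) = s * norm A" using that by simp
      also have "\<dots> \<le> t * K" using that nA K0 by (intro mult_mono) auto
      finally show ?thesis .
    qed
    have bdd: "bdd_above ((\<lambda>s. norm (op_exp (s *\<^sub>R A))) ` {0..t})"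
    proof (rule bdd_aboveI2)
      fix s assume "s \<in> {0..t}"
      then show "norm (op_exp (s *\<^sub>R A)) \<le> exp (t * K)"
        using order_trans[OF norm_op_exp exp_mono[OF nsA]] by blast
    qed
    have ebu: "norm (op_exp (s *\<^sub>R A)) \<le> eb" if "s \<in> {0..t}" for s
      unfolding eb_def by (rule cSUP_upper[OF that bdd])
    have eb0: "0 \<le> eb" using ebu[of 0] t0 by (meson atLeastAtMost_iff norm_ge_zero order_trans order_refl)
    have ebe: "eb \<le> exp u"
      unfolding eb_def ut using t0
      by (intro cSUP_least) (auto intro: order_trans[OF norm_op_exp exp_mono[OF nsA]])
    have RHS0: "0 \<le> t * cp * K / real n + (cp + (1 + eb) * (1 + cp ^ 2)) / 2 * (t ^ 2 * K ^ 2 / real n)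
                 + 2 * c / (\<delta>' - \<delta>) * \<delta>' ^ n
                 + 2 * \<delta>' / (1 - \<delta>') * (exp (6 * t * cp * c * K / (\<delta>' - \<delta>)) / real n)"
      unfolding cp_def using t0 K0 eb0 c0 dd' delta by (intro add_nonneg_nonneg) auto
    have goal: "norm (opow n (M o\<^sub>L T) - (op_exp (t *\<^sub>R A) o\<^sub>L P))
        \<le> t * cp * K / real n + (cp + (1 + eb) * (1 + cp ^ 2)) / 2 * (t ^ 2 * K ^ 2 / real n)
                 + 2 * c / (\<delta>' - \<delta>) * \<delta>' ^ n
                 + 2 * \<delta>' / (1 - \<delta>') * (exp (6 * t * cp * c * K / (\<delta>' - \<delta>)) / real n)"
    proof (cases "cp = 0")
      case True
      then have Pid: "P = id_blinfun" unfolding cp_def by simp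
      then have Mid: "M = id_blinfun" using MP by simp
      have "opow n (M o\<^sub>L T) = op_exp ((real n * \<tau>) *\<^sub>R L)"
        unfolding Mid T_def by (simp add: op_exp_mult_opow)
      also have "\<dots> = op_exp (t *\<^sub>R A) o\<^sub>L P" unfolding n\<tau> A_def Pid by simp
      finally show ?thesis using RHS0 by simp
    next
      case False
      have cp1: "1 \<le> cp"
      proof -
        have QQ: "(id_blinfun - P) o\<^sub>L (id_blinfun - P) = id_blinfun - P"
          by (simp add: cdiff_left cdiff_right P_proj)
        have "cp \<le> cp * cp" unfolding cp_def by (metis QQ norm_blinfun_compose)
        moreover have "0 < cp" using False unfolding cp_def by simp
        ultimately show ?thesis by simp
      qed
      have cp2: "cp \<le> 2"
      proof -
        have "cp \<le> norm (id_blinfun :: 'a op) + norm P" unfolding cp_def by (rule norm_triangle_ineq4)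
        also have "\<dots> \<le> 1 + 1" using nP norm_blinfun_id_le by (intro add_mono) auto
        finally show ?thesis by simp
      qed
      have nT: "norm T \<le> 1" using contractive_sg \<tau>0 by (simp add: T_def)
      have nX: "norm (T - id_blinfun) \<le> xp"
        unfolding T_def xp_def using norm_op_exp_minus_id[of "\<tau> *\<^sub>R L"] n\<tau>L by simp
      interpret Z: zsetup M P T c \<delta> xp
        by unfold_locales (use P_proj MP PM nP M_contr nT conv' delta c0 nX in auto)
      obtain m where nm: "n = Suc m" using n1 by (cases n) auto
      define G where "G j = op_exp ((real j * \<tau>) *\<^sub>R A)" for j
      have G0: "G 0 = id_blinfun" unfolding G_def by (simp add: op_exp_zero)
      have G1: "G 1 = op_exp (\<tau> *\<^sub>R A)" unfolding G_def by simp
      have GS: "G (Suc j) = G j o\<^sub>L G 1" for j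
      proof -
        have "G j o\<^sub>L G 1 = op_exp ((real j * \<tau> + \<tau>) *\<^sub>R A)"
          unfolding G1 unfolding G_def by (rule op_exp_add)
        also have "\<dots> = G (Suc j)" unfolding G_def by (simp add: distrib_right add.commute)
        finally show ?thesis by simp
      qed
      have dd: "norm ((P o\<^sub>L T o\<^sub>L P) - (G 1 o\<^sub>L P)) \<le> 2 * (exp x - 1 - x)"
      proof -
        define E where "E = op_exp (\<tau> *\<^sub>R A)"
        have h1: "P o\<^sub>L (T - id_blinfun - \<tau> *\<^sub>R L) o\<^sub>L P = (P o\<^sub>L T o\<^sub>L P) - P - \<tau> *\<^sub>R A"
          unfolding A_def by (simp add: cdiff_left cdiff_right cscale_left cscale_right P_proj)
        have AP: "A o\<^sub>L P = A" unfolding A_def by (simp add: cassoc P_proj)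
        have h2: "(E - id_blinfun - \<tau> *\<^sub>R A) o\<^sub>L P = (E o\<^sub>L P) - P - \<tau> *\<^sub>R A"
          by (simp add: cdiff_left cscale_left AP)
        have eq: "(P o\<^sub>L T o\<^sub>L P) - (G 1 o\<^sub>L P) = (P o\<^sub>L (T - id_blinfun - \<tau> *\<^sub>R L) o\<^sub>L P) - ((E - id_blinfun - \<tau> *\<^sub>R A) o\<^sub>L P)"
          unfolding h1 h2 G1 by (simp add: E_def)
        have n1: "norm (P o\<^sub>L (T - id_blinfun - \<tau> *\<^sub>R L) o\<^sub>L P) \<le> exp x - 1 - x"
        proof -
          have "norm (P o\<^sub>L (T - id_blinfun - \<tau> *\<^sub>R L) o\<^sub>L P) \<le> norm P * norm (T - id_blinfun - \<tau> *\<^sub>R L) * norm P"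
            by (rule norm3)
          also have "\<dots> \<le> 1 * norm (T - id_blinfun - \<tau> *\<^sub>R L) * 1"
            using nP by (intro mult_mono) auto
          also have "\<dots> \<le> exp x - 1 - x"
            unfolding T_def using norm_op_exp_minus_lin[of "\<tau> *\<^sub>R L"] n\<tau>L by simp
          finally show ?thesis .
        qed
        have n2: "norm ((E - id_blinfun - \<tau> *\<^sub>R A) o\<^sub>L P) \<le> exp x - 1 - x"
        proof -
          have "norm ((E - id_blinfun - \<tau> *\<^sub>R A) o\<^sub>L P) \<le> norm (E - id_blinfun - \<tau> *\<^sub>R A) * norm P"
            by (rule norm_blinfun_compose)
          also have "\<dots> \<le> norm (E - id_blinfun - \<tau> *\<^sub>R A) * 1"
            using nP by (intro mult_left_mono) auto
          also have "\<dots> \<le> exp (norm (\<tau> *\<^sub>R A)) - 1 - norm (\<tau> *\<^sub>R A)"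
            unfolding E_def using norm_op_exp_minus_lin[of "\<tau> *\<^sub>R A"] by simp
          also have "\<dots> \<le> exp x - 1 - x"
          proof (rule mono_r)
            show "norm (\<tau> *\<^sub>R A) \<le> x" unfolding x_def using \<tau>0 nA by (simp add: mult_left_mono)
          qed simp
          finally show ?thesis .
        qed
        show ?thesis unfolding eq
          using order_trans[OF norm_triangle_ineq4 add_mono[OF n1 n2]] by simp
      qed
      have Gb: "\<forall>j<Suc m. norm (G j) \<le> eb"
      proof (intro allI impI)
        fix j assume "j < Suc m"
        then have "real j \<le> real n" using nm by simp
        then have "real j * \<tau> \<le> real n * \<tau>" using \<tau>0 by (rule mult_right_mono)
        then have "real j * \<tau> \<in> {0..t}" using n\<tau> \<tau>0 by simp
        then show "norm (G j) \<le> eb" unfolding G_def by (rule ebu)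
      qed
      note al = alpha_ok[OF x0 x1(1) x1(2) xp_def delta c_gt]
      note tb = Z.total_bound[OF G0 GS dd Gb al(1) al(2) al(3)]
      have hR0: "norm (Z.R 0) = cp" unfolding Z.R_def cp_def by simp
      have hZ: "Z.Z (Suc m) = opow n (M o\<^sub>L T)" unfolding Z.Z_def nm ..
      have hG: "G (Suc m) = op_exp (t *\<^sub>R A)" unfolding G_def using n\<tau> nm by simp
      note tb2 = tb[unfolded hR0 hZ hG, folded nm]
      note mr = main_real[OF nm u_def x0 x1(1) x1(2) x1(3) x1(4) N0c xp_def delta(1) dd' c_gt cp1 cp2 eb0 ebe]
      have e1: "cp * x = t * cp * K / real n" unfolding x_def \<tau>_def by simp
      have e2: "u^2 / real n = t ^ 2 * K ^ 2 / real n" unfolding ut by (simp add: power_mult_distrib)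
      have e3: "6 * cp * c * u / (\<delta>' - \<delta>) = 6 * t * cp * c * K / (\<delta>' - \<delta>)" unfolding ut by (simp add: mult_ac)
      have e4: "2 * ((\<delta>' / (1 - \<delta>')) * exp (6 * t * cp * c * K / (\<delta>' - \<delta>))) / real n
               = 2 * \<delta>' / (1 - \<delta>') * (exp (6 * t * cp * c * K / (\<delta>' - \<delta>)) / real n)" by simp
      show ?thesis using order_trans[OF tb2 mr] unfolding e1 e2 e3 e4 .
    qed
    show "let cp = norm (id_blinfun - P);
                nL = norm L;
                eb = (SUP s\<in>{0..t}. norm (op_exp (s *\<^sub>R (P o\<^sub>L L o\<^sub>L P))))
            in norm (opow n (M o\<^sub>L op_exp ((t / real n) *\<^sub>R L))
                     - (op_exp (t *\<^sub>R (P o\<^sub>L L o\<^sub>L P)) o\<^sub>L P))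
               \<le> t * cp * nL / real n
                 + (cp + (1 + eb) * (1 + cp ^ 2)) / 2 * (t ^ 2 * nL ^ 2 / real n)
                 + 2 * c / (\<delta>' - \<delta>) * \<delta>' ^ n
                 + 2 * \<delta>' / (1 - \<delta>') * (exp (6 * t * cp * c * nL / (\<delta>' - \<delta>)) / real n)"
      using goal unfolding Let_def cp_def K_def eb_def A_def T_def \<tau>_def .
  qed
qed


end
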